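(* Let $k$ be any field, let $H=\bigoplus_{n\ge0}H^n$ be a graded Hopf algebra with finite-dimensional homogeneous components, and let $L=\bigoplus_{n\ge0}(H^n)^*$ be its graded dual Hopf algebra. Assume $H^0=H_0$ is both cosemisimple and semisimple (so that $L^0$ is also). Then the following are equivalent: (i) $H$ is coradically graded and is generated as an algebra by $H^0$ and $H^1$; (ii) $L$ is coradically graded and is generated as an algebra by $L^0$ and $L^1$.
   Context: A graded coalgebra $C=\bigoplus_{i\ge0}C(i)$ is coradically graded if $C(0)=C_0$ (the coradical) and $C_1=C(0)\oplus C(1)$, where $C_0\subseteq C_1\subseteq\cdots$ is the coradical filtration. $H_0$ denotes the coradical of $H$. The graded dual $L$ has $L^n=(H^n)^*$ with the Hopf algebra structure dual to that of $H$. *)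

theory Defs
  imports Main
begin

text \<open>
  A graded Hopf algebra H over a field 'k with finite-dimensional homogeneous
  components H^n is encoded by a homogeneous basis: H^n has basis e_(n,i),
  i < hdim H n.  Elements of H are finitely supported coefficient functions
  on basis indices (n,i); elements of H (x) H are finitely supported
  functions on pairs of basis indices, etc.  Structure constants:
    e_(p,i) e_(q,j) = sum_k hmu H p i q j k e_(p+q,k)
    Delta e_(n,k)   = sum_{p+q=n} sum_{i,j} hde H p i q j k e_(p,i) (x) e_(q,j)
    1 = sum_i hun H i e_(0,i),   eps e_(0,i) = hcu H i,  eps(H^n) = 0 for n>0
    S e_(n,i) = sum_j han H n i j e_(n,j).
  Gradedness of all structure maps is built into this encoding.
\<close>

record 'k hopf_data =
  hdim :: "nat \<Rightarrow> nat"
  hmu  :: "nat \<Rightarrow> nat \<Rightarrow> nat \<Rightarrow> nat \<Rightarrow> nat \<Rightarrow> 'k"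
  hde  :: "nat \<Rightarrow> nat \<Rightarrow> nat \<Rightarrow> nat \<Rightarrow> nat \<Rightarrow> 'k"
  hun  :: "nat \<Rightarrow> 'k"
  hcu  :: "nat \<Rightarrow> 'k"
  han  :: "nat \<Rightarrow> nat \<Rightarrow> nat \<Rightarrow> 'k"

type_synonym 'k vec = "nat \<times> nat \<Rightarrow> 'k"
type_synonym 'k ten = "(nat \<times> nat) \<times> (nat \<times> nat) \<Rightarrow> 'k"
type_synonym 'k ten3 = "(nat \<times> nat) \<times> (nat \<times> nat) \<times> (nat \<times> nat) \<Rightarrow> 'k"

definition valid_idx :: "'k hopf_data \<Rightarrow> nat \<times> nat \<Rightarrow> bool" where
  "valid_idx H a \<longleftrightarrow> snd a < hdim H (fst a)"

definition carrier_H :: "('k::field) hopf_data \<Rightarrow> 'k vec set" where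
  "carrier_H H = {v. (\<forall>a. \<not> valid_idx H a \<longrightarrow> v a = 0) \<and> finite {a. v a \<noteq> 0}}"

definition tensor :: "('a \<Rightarrow> 'k::field) \<Rightarrow> ('b \<Rightarrow> 'k) \<Rightarrow> ('a \<times> 'b \<Rightarrow> 'k)" where
  "tensor x y = (\<lambda>(a,b). x a * y b)"

definition mult_t :: "('k::field) hopf_data \<Rightarrow> 'k ten \<Rightarrow> 'k vec" where
  "mult_t H t = (\<lambda>(n,k). if k < hdim H n then
      (\<Sum>p\<le>n. \<Sum>i<hdim H p. \<Sum>j<hdim H (n-p).
          t ((p,i),(n-p,j)) * hmu H p i (n-p) j k) else 0)"

definition mult :: "('k::field) hopf_data \<Rightarrow> 'k vec \<Rightarrow> 'k vec \<Rightarrow> 'k vec" where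
  "mult H v w = mult_t H (tensor v w)"

definition one :: "('k::field) hopf_data \<Rightarrow> 'k vec" where
  "one H = (\<lambda>(n,i). if n = 0 \<and> i < hdim H 0 then hun H i else 0)"

definition comul :: "('k::field) hopf_data \<Rightarrow> 'k vec \<Rightarrow> 'k ten" where
  "comul H v = (\<lambda>((p,i),(q,j)). if i < hdim H p \<and> j < hdim H q then
      (\<Sum>k<hdim H (p+q). v (p+q,k) * hde H p i q j k) else 0)"

definition eps :: "('k::field) hopf_data \<Rightarrow> 'k vec \<Rightarrow> 'k" where
  "eps H v = (\<Sum>i<hdim H 0. v (0,i) * hcu H i)"

definition comul_l :: "('k::field) hopf_data \<Rightarrow> 'k ten \<Rightarrow> 'k ten3" where
  "comul_l H t = (\<lambda>((p,i),(q,j),c). if i < hdim H p \<and> j < hdim H q then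
      (\<Sum>k<hdim H (p+q). t ((p+q,k),c) * hde H p i q j k) else 0)"

definition comul_r :: "('k::field) hopf_data \<Rightarrow> 'k ten \<Rightarrow> 'k ten3" where
  "comul_r H t = (\<lambda>(a,(p,i),(q,j)). if i < hdim H p \<and> j < hdim H q then
      (\<Sum>k<hdim H (p+q). t (a,(p+q,k)) * hde H p i q j k) else 0)"

definition eps_l :: "('k::field) hopf_data \<Rightarrow> 'k ten \<Rightarrow> 'k vec" where
  "eps_l H t = (\<lambda>b. \<Sum>i<hdim H 0. t ((0,i),b) * hcu H i)"

definition eps_r :: "('k::field) hopf_data \<Rightarrow> 'k ten \<Rightarrow> 'k vec" where
  "eps_r H t = (\<lambda>a. \<Sum>i<hdim H 0. t (a,(0,i)) * hcu H i)"

definition tmult :: "('k::field) hopf_data \<Rightarrow> 'k ten \<Rightarrow> 'k ten \<Rightarrow> 'k ten" where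
  "tmult H s t = (\<lambda>((n,k),(n',k')). if k < hdim H n \<and> k' < hdim H n' then
      (\<Sum>p\<le>n. \<Sum>p'\<le>n'. \<Sum>i<hdim H p. \<Sum>j<hdim H (n-p).
         \<Sum>i'<hdim H p'. \<Sum>j'<hdim H (n'-p').
         s ((p,i),(p',i')) * t ((n-p,j),(n'-p',j'))
           * hmu H p i (n-p) j k * hmu H p' i' (n'-p') j' k') else 0)"

definition ant_l :: "('k::field) hopf_data \<Rightarrow> 'k ten \<Rightarrow> 'k ten" where
  "ant_l H t = (\<lambda>((p,i),b). if i < hdim H p then
      (\<Sum>i'<hdim H p. t ((p,i'),b) * han H p i' i) else 0)"

definition ant_r :: "('k::field) hopf_data \<Rightarrow> 'k ten \<Rightarrow> 'k ten" where
  "ant_r H t = (\<lambda>(a,(p,i)). if i < hdim H p then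
      (\<Sum>i'<hdim H p. t (a,(p,i')) * han H p i' i) else 0)"

definition graded_hopf :: "('k::field) hopf_data \<Rightarrow> bool" where
  "graded_hopf H \<longleftrightarrow>
     (\<forall>u\<in>carrier_H H. \<forall>v\<in>carrier_H H. \<forall>w\<in>carrier_H H.
        mult H (mult H u v) w = mult H u (mult H v w)) \<and>
     (\<forall>v\<in>carrier_H H. mult H (one H) v = v \<and> mult H v (one H) = v) \<and>
     (\<forall>v\<in>carrier_H H. comul_l H (comul H v) = comul_r H (comul H v)) \<and>
     (\<forall>v\<in>carrier_H H. eps_l H (comul H v) = v \<and> eps_r H (comul H v) = v) \<and>
     (\<forall>v\<in>carrier_H H. \<forall>w\<in>carrier_H H.
        comul H (mult H v w) = tmult H (comul H v) (comul H w)) \<and>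
     comul H (one H) = tensor (one H) (one H) \<and>
     (\<forall>v\<in>carrier_H H. \<forall>w\<in>carrier_H H. eps H (mult H v w) = eps H v * eps H w) \<and>
     eps H (one H) = 1 \<and>
     (\<forall>v\<in>carrier_H H.
        mult_t H (ant_l H (comul H v)) = (\<lambda>a. eps H v * one H a) \<and>
        mult_t H (ant_r H (comul H v)) = (\<lambda>a. eps H v * one H a))"

text \<open>Graded dual L = \<Oplus> (H^n)^*, written in the dual bases: structure constants
  of multiplication and comultiplication are exchanged, unit and counit are
  exchanged, and the antipode matrix is transposed.\<close>
definition gdual :: "('k::field) hopf_data \<Rightarrow> 'k hopf_data" where
  "gdual H = H\<lparr> hmu := hde H, hde := hmu H, hun := hcu H, hcu := hun H,
                han := (\<lambda>n i j. han H n j i) \<rparr>"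

definition lin_span :: "('a \<Rightarrow> 'k::field) set \<Rightarrow> ('a \<Rightarrow> 'k) set" where
  "lin_span S = {v. \<exists>(n::nat) c xs. (\<forall>i<n. xs i \<in> S) \<and> v = (\<lambda>x. \<Sum>i<n. c i * xs i x)}"

definition subspace :: "('a \<Rightarrow> 'k::field) set \<Rightarrow> bool" where
  "subspace W \<longleftrightarrow> (\<lambda>_. 0) \<in> W \<and> (\<forall>u\<in>W. \<forall>w\<in>W. (\<lambda>x. u x + w x) \<in> W)
      \<and> (\<forall>c. \<forall>u\<in>W. (\<lambda>x. c * u x) \<in> W)"

definition ssum :: "('a \<Rightarrow> 'k::field) set \<Rightarrow> ('a \<Rightarrow> 'k) set \<Rightarrow> ('a \<Rightarrow> 'k) set" where
  "ssum A B = {(\<lambda>x. a x + b x) | a b. a \<in> A \<and> b \<in> B}"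

definition tens_span :: "('k::field) vec set \<Rightarrow> 'k vec set \<Rightarrow> 'k ten set" where
  "tens_span A B = lin_span {tensor x y | x y. x \<in> A \<and> y \<in> B}"

definition subcoalg :: "('k::field) hopf_data \<Rightarrow> 'k vec set \<Rightarrow> bool" where
  "subcoalg H C \<longleftrightarrow> C \<subseteq> carrier_H H \<and> subspace C \<and>
      (\<forall>x\<in>C. comul H x \<in> tens_span C C)"

definition simple_subcoalg :: "('k::field) hopf_data \<Rightarrow> 'k vec set \<Rightarrow> bool" where
  "simple_subcoalg H C \<longleftrightarrow> subcoalg H C \<and> C \<noteq> {\<lambda>_. 0} \<and>
      (\<forall>D. subcoalg H D \<and> D \<subseteq> C \<longrightarrow> D = {\<lambda>_. 0} \<or> D = C)"

definition coradical :: "('k::field) hopf_data \<Rightarrow> 'k vec set" where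
  "coradical H = lin_span (\<Union> {C. simple_subcoalg H C})"

primrec corad_filt :: "('k::field) hopf_data \<Rightarrow> nat \<Rightarrow> 'k vec set" where
  "corad_filt H 0 = coradical H"
| "corad_filt H (Suc n) = {x \<in> carrier_H H. comul H x \<in>
      ssum (tens_span (carrier_H H) (corad_filt H n)) (tens_span (coradical H) (carrier_H H))}"

definition hcomp :: "('k::field) hopf_data \<Rightarrow> nat \<Rightarrow> 'k vec set" where
  "hcomp H n = {v \<in> carrier_H H. \<forall>m i. m \<noteq> n \<longrightarrow> v (m,i) = 0}"

definition coradically_graded :: "('k::field) hopf_data \<Rightarrow> bool" where
  "coradically_graded H \<longleftrightarrow> coradical H = hcomp H 0 \<and>
      corad_filt H 1 = ssum (hcomp H 0) (hcomp H 1)"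

definition cosemisimple :: "('k::field) hopf_data \<Rightarrow> 'k vec set \<Rightarrow> bool" where
  "cosemisimple H C \<longleftrightarrow> C = lin_span (\<Union> {D. simple_subcoalg H D \<and> D \<subseteq> C})"

definition subalgebra :: "('k::field) hopf_data \<Rightarrow> 'k vec set \<Rightarrow> bool" where
  "subalgebra H A \<longleftrightarrow> A \<subseteq> carrier_H H \<and> subspace A \<and> one H \<in> A \<and>
      (\<forall>x\<in>A. \<forall>y\<in>A. mult H x y \<in> A)"

definition generated_by_01 :: "('k::field) hopf_data \<Rightarrow> bool" where
  "generated_by_01 H \<longleftrightarrow>
     (\<forall>A. subalgebra H A \<and> hcomp H 0 \<union> hcomp H 1 \<subseteq> A \<longrightarrow> A = carrier_H H)"

definition left_ideal :: "('k::field) hopf_data \<Rightarrow> 'k vec set \<Rightarrow> 'k vec set \<Rightarrow> bool" where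
  "left_ideal H A I \<longleftrightarrow> I \<subseteq> A \<and> subspace I \<and> (\<forall>a\<in>A. \<forall>x\<in>I. mult H a x \<in> I)"

definition semisimple_alg :: "('k::field) hopf_data \<Rightarrow> 'k vec set \<Rightarrow> bool" where
  "semisimple_alg H A \<longleftrightarrow> (\<forall>I. left_ideal H A I \<longrightarrow>
      (\<exists>J. left_ideal H A J \<and> ssum I J = A \<and> I \<inter> J = {\<lambda>_. 0}))"

end

theory Submission
  imports Defs "HOL.Vector_Spaces" "HOL-Library.Function_Algebras"
begin


interpretation fv: vector_space "\<lambda>(c::'k::field) (v::'a \<Rightarrow> 'k). (\<lambda>x. c * v x)"
  by unfold_locales (auto simp: fun_eq_iff algebra_simps)

lemma sum_fun_app: "(\<Sum>a\<in>A. f a) x = (\<Sum>a\<in>A. f a x)"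
  by (induct A rule: infinite_finite_induct) auto

definition dot :: "'a set \<Rightarrow> ('a \<Rightarrow> 'k::field) \<Rightarrow> ('a \<Rightarrow> 'k) \<Rightarrow> 'k" where
  "dot F c v = (\<Sum>y\<in>F. c y * v y)"

lemma dot_insert: "finite F \<Longrightarrow> x \<notin> F \<Longrightarrow> dot (insert x F) c v = c x * v x + dot F c v"
  by (simp add: dot_def)

lemma dot_upd: "x \<notin> F \<Longrightarrow> dot F (c(x:=a)) v = dot F c v"
  unfolding dot_def by (rule sum.cong) auto

lemma dot_lin: "dot F c (\<lambda>y. a y - t * b y) = dot F c a - t * dot F c b"
  unfolding dot_def by (simp add: algebra_simps sum_subtractf sum_distrib_left)

lemma LA1:
  assumes "finite F"
  shows "\<forall>r\<in>R. \<forall>y. y \<notin> F \<longrightarrow> r y = 0 \<Longrightarrow> \<forall>y. y \<notin> F \<longrightarrow> v y = 0 \<Longrightarrow> v \<notin> fv.span R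
    \<Longrightarrow> \<exists>c. (\<forall>r\<in>R. dot F c r = (0::'k::field)) \<and> dot F c v \<noteq> 0"
  using assms
proof (induct F arbitrary: R v rule: finite_induct)
  case empty
  then have "v = 0" by (auto simp: fun_eq_iff)
  then have "v \<in> fv.span R" using fv.span_zero[of R] by simp
  then show ?case using empty by blast
next
  case (insert x F)
  show ?case
  proof (cases "\<exists>r0\<in>R. r0 x \<noteq> 0")
    case True
    then obtain r0 where r0: "r0 \<in> R" "r0 x \<noteq> 0" by auto
    define R' where "R' = (\<lambda>r. \<lambda>y. r y - (r x / r0 x) * r0 y) ` R"
    define v' where "v' = (\<lambda>y. v y - (v x / r0 x) * r0 y)"
    have R'F: "\<forall>r\<in>R'. \<forall>y. y \<notin> F \<longrightarrow> r y = 0"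
    proof (intro ballI allI impI)
      fix w y assume "w \<in> R'" "y \<notin> F"
      then obtain r where r: "r \<in> R" "w = (\<lambda>y. r y - (r x / r0 x) * r0 y)" unfolding R'_def by auto
      show "w y = 0"
      proof (cases "y = x")
        case True then show ?thesis using r r0 by simp
      next
        case False
        have "r y = 0" "r0 y = 0" using insert.prems(1) r(1) r0(1) False \<open>y \<notin> F\<close> by blast+
        then show ?thesis using r by simp
      qed
    qed
    have v'F: "\<forall>y. y \<notin> F \<longrightarrow> v' y = 0"
    proof (intro allI impI)
      fix y assume "y \<notin> F"
      show "v' y = 0"
      proof (cases "y = x")
        case True then show ?thesis using r0 unfolding v'_def by simp
      next
        case False
        have "v y = 0" "r0 y = 0" using insert.prems(1,2) r0(1) False \<open>y \<notin> F\<close> by blast+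
        then show ?thesis unfolding v'_def by simp
      qed
    qed
    have R'sub: "fv.span R' \<subseteq> fv.span R"
    proof (rule fv.span_minimal[OF _ fv.subspace_span])
      show "R' \<subseteq> fv.span R"
      proof
        fix w assume "w \<in> R'"
        then obtain r where r: "r \<in> R" "w = (\<lambda>y. r y - (r x / r0 x) * r0 y)" unfolding R'_def by auto
        have weq: "w = r + (\<lambda>y. (- (r x / r0 x)) * r0 y)" using r by (auto simp: fun_eq_iff)
        have s1: "r \<in> fv.span R" "r0 \<in> fv.span R" using r r0 by (auto intro: fv.span_base)
        have s2: "(\<lambda>y. (- (r x / r0 x)) * r0 y) \<in> fv.span R" by (rule fv.span_scale[OF s1(2)])
        show "w \<in> fv.span R" unfolding weq by (rule fv.span_add[OF s1(1) s2])
      qed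
    qed
    have "v' \<notin> fv.span R'"
    proof
      assume "v' \<in> fv.span R'"
      then have "v' \<in> fv.span R" using R'sub by auto
      moreover have veq: "v = v' + (\<lambda>y. (v x / r0 x) * r0 y)" unfolding v'_def by (auto simp: fun_eq_iff)
      moreover have "r0 \<in> fv.span R" using r0 by (auto intro: fv.span_base)
      then have "(\<lambda>y. (v x / r0 x) * r0 y) \<in> fv.span R" by (rule fv.span_scale)
      ultimately have "v \<in> fv.span R" using fv.span_add by metis
      then show False using insert.prems by auto
    qed
    then obtain c' where c': "\<forall>r\<in>R'. dot F c' r = 0" "dot F c' v' \<noteq> 0"
      using insert.hyps(3)[OF R'F v'F] by auto
    define c where "c = c'(x := - dot F c' r0 / r0 x)"
    have dc: "dot (insert x F) c w = c x * w x + dot F c' w" for w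
      unfolding c_def using insert.hyps by (simp add: dot_insert dot_upd)
    have dr: "dot F c' r = (r x / r0 x) * dot F c' r0" if "r \<in> R" for r
    proof -
      have e1: "dot F c' (\<lambda>y. r y - (r x / r0 x) * r0 y) = 0" using c' that unfolding R'_def by auto
      have "dot F c' r - (r x / r0 x) * dot F c' r0 = 0" using e1 unfolding dot_lin .
      then show ?thesis by simp
    qed
    have cx: "c x = - dot F c' r0 / r0 x" unfolding c_def by simp
    show ?thesis
    proof (intro exI conjI ballI)
      fix r assume "r \<in> R"
      show "dot (insert x F) c r = 0" unfolding dc cx using dr[OF \<open>r\<in>R\<close>] r0(2) by (simp add: field_simps)
    next
      have "dot F c' v' = dot F c' v - (v x / r0 x) * dot F c' r0" unfolding v'_def by (rule dot_lin)
      then have "c x * v x + dot F c' v = dot F c' v'" unfolding cx using r0(2) by (simp add: field_simps)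
      then show "dot (insert x F) c v \<noteq> 0" unfolding dc using c'(2) by simp
    qed
  next
    case False
    show ?thesis
    proof (cases "v x = 0")
      case True
      have RF: "\<forall>r\<in>R. \<forall>y. y \<notin> F \<longrightarrow> r y = 0"
      proof (intro ballI allI impI)
        fix r y assume "r \<in> R" "y \<notin> F"
        then show "r y = 0" using insert.prems(1) False by (cases "y = x") auto
      qed
      have vF: "\<forall>y. y \<notin> F \<longrightarrow> v y = 0"
      proof (intro allI impI)
        fix y assume "y \<notin> F"
        then show "v y = 0" using insert.prems(2) True by (cases "y = x") auto
      qed
      obtain c where c: "\<forall>r\<in>R. dot F c r = 0" "dot F c v \<noteq> 0" using insert.hyps(3)[OF RF vF insert.prems(3)] by auto
      show ?thesis using c False True insert.hyps by (intro exI[of _ c]) (auto simp: dot_insert)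
    next
      case vx: False
      define c where "c = (\<lambda>y. if y = x then (1::'k) else 0)"
      have "dot (insert x F) c w = w x" for w
      proof -
        have "dot F c w = 0" unfolding dot_def c_def using insert.hyps(2) by (intro sum.neutral) auto
        then show ?thesis using insert.hyps by (simp add: dot_insert c_def)
      qed
      then show ?thesis using False vx by (intro exI[of _ c]) auto
    qed
  qed
qed



lemma subspace_iff: "Defs.subspace W \<longleftrightarrow> fv.subspace W"
  unfolding subspace_def fv.subspace_def zero_fun_def plus_fun_def by simp

lemma lin_span_eq: "lin_span S = fv.span S"
proof
  show "lin_span S \<subseteq> fv.span S"
  proof
    fix v assume "v \<in> lin_span S"
    then obtain n c xs where h: "\<forall>i<(n::nat). xs i \<in> S" "v = (\<lambda>x. \<Sum>i<n. c i * xs i x)"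
      unfolding lin_span_def by (auto simp only: mem_Collect_eq)
    have "v = (\<Sum>i<n. (\<lambda>x. c i * xs i x))" unfolding h by (auto simp: fun_eq_iff sum_fun_app)
    also have "\<dots> \<in> fv.span S"
      by (rule fv.span_sum, rule fv.span_scale, rule fv.span_base) (use h in auto)
    finally show "v \<in> fv.span S" .
  qed
next
  show "fv.span S \<subseteq> lin_span S"
  proof
    fix v assume "v \<in> fv.span S"
    then show "v \<in> lin_span S"
    proof (induct rule: fv.span_induct_alt)
      case base
      show ?case unfolding lin_span_def zero_fun_def by (intro CollectI exI[of _ 0]) auto
    next
      case (step c x y)
      then obtain n d xs where h: "\<forall>i<(n::nat). xs i \<in> S" "y = (\<lambda>x. \<Sum>i<n. d i * xs i x)"
        unfolding lin_span_def by (auto simp only: mem_Collect_eq)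
      show ?case unfolding lin_span_def
      proof (intro CollectI exI conjI allI impI)
        fix i assume "i < Suc n"
        then show "(xs(n := x)) i \<in> S" using h step by auto
      next
        show "(\<lambda>xa. c * x xa) + y = (\<lambda>xa. \<Sum>i<Suc n. (d(n:=c)) i * (xs(n := x)) i xa)"
          unfolding h by (auto simp: fun_eq_iff intro!: sum.cong)
      qed
    qed
  qed
qed

lemma tens_span_eq: "tens_span U V = fv.span {tensor x y | x y. x \<in> U \<and> y \<in> V}"
  unfolding tens_span_def lin_span_eq ..

lemma tens_gen: "x \<in> U \<Longrightarrow> y \<in> V \<Longrightarrow> tensor x y \<in> fv.span {tensor x y | x y. x \<in> U \<and> y \<in> V}"
  by (rule fv.span_base) blast

lemma col_in:
  assumes "T \<in> fv.span {tensor x y | x y. x \<in> U \<and> y \<in> V}" "fv.subspace U"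
  shows "(\<lambda>a. T (a,b)) \<in> U"
  using assms(1)
proof (induct rule: fv.span_induct)
  case base
  show ?case using assms(2) unfolding fv.subspace_def
    by (auto simp: zero_fun_def plus_fun_def)
next
  case (step T)
  then obtain x y where "x \<in> U" "T = tensor x y" by blast
  then have "(\<lambda>a. T (a,b)) = (\<lambda>a. y b * x a)" by (auto simp: tensor_def fun_eq_iff)
  then show ?case using assms(2) \<open>x \<in> U\<close> unfolding fv.subspace_def by auto
qed

lemma row_in:
  assumes "T \<in> fv.span {tensor x y | x y. x \<in> U \<and> y \<in> V}" "fv.subspace V"
  shows "(\<lambda>b. T (a,b)) \<in> V"
  using assms(1)
proof (induct rule: fv.span_induct)
  case base
  show ?case using assms(2) unfolding fv.subspace_def
    by (auto simp: zero_fun_def plus_fun_def)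
next
  case (step T)
  then obtain x y where "y \<in> V" "T = tensor x y" by blast
  then have "(\<lambda>b. T (a,b)) = (\<lambda>b. x a * y b)" by (auto simp: tensor_def fun_eq_iff)
  then show ?case using assms(2) \<open>y \<in> V\<close> unfolding fv.subspace_def by auto
qed

lemma subsp_comb:
  assumes "fv.subspace U" "x \<in> U" "y \<in> U"
  shows "(\<lambda>a. x a - t * y a) \<in> U"
proof -
  have "(\<lambda>a. (-t) * y a) \<in> U" using assms unfolding fv.subspace_def by blast
  then have "x + (\<lambda>a. (-t) * y a) \<in> U" using assms unfolding fv.subspace_def by blast
  moreover have "x + (\<lambda>a. (-t) * y a) = (\<lambda>a. x a - t * y a)" by (auto simp: fun_eq_iff)
  ultimately show ?thesis by simp
qed

lemma lemmaG_aux: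
  fixes T :: "'a \<times> 'b \<Rightarrow> 'k::field"
  assumes "fv.subspace U" "fv.subspace V"
  shows "card (fst ` {z. T z \<noteq> 0}) = n \<Longrightarrow> finite {z. T z \<noteq> 0} \<Longrightarrow>
    (\<forall>b. (\<lambda>a. T (a,b)) \<in> U) \<Longrightarrow> (\<forall>a. (\<lambda>b. T (a,b)) \<in> V) \<Longrightarrow>
    T \<in> fv.span {tensor x y | x y. x \<in> U \<and> y \<in> V}"
proof (induct n arbitrary: T rule: less_induct)
  case (less n T)
  show ?case
  proof (cases "{z. T z \<noteq> 0} = {}")
    case True
    then have "T = 0" by (auto simp: fun_eq_iff)
    then show ?thesis by (simp only:) (rule fv.span_zero)
  next
    case False
    then obtain a0 b0 where ab: "T (a0,b0) \<noteq> 0" by auto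
    define t where "t = T (a0,b0)"
    define T' where "T' = (\<lambda>(a,b). T (a,b) - (T (a0,b) / t) * T (a,b0))"
    have T'1: "T' (a,b) = T (a,b) - (T (a0,b) / t) * T (a,b0)" for a b unfolding T'_def by simp
    have T'2: "T' (a,b) = T (a,b) - (T (a,b0) / t) * T (a0,b)" for a b unfolding T'_def by (simp add: algebra_simps)
    have cols: "\<forall>b. (\<lambda>a. T' (a,b)) \<in> U"
      unfolding T'1 by (intro allI subsp_comb[OF assms(1)]) (use less.prems(3) in blast)+
    have rows: "\<forall>a. (\<lambda>b. T' (a,b)) \<in> V"
      unfolding T'2 by (intro allI subsp_comb[OF assms(2)]) (use less.prems(4) in blast)+
    have supp: "{z. T' z \<noteq> 0} \<subseteq> {z. T z \<noteq> 0} \<union> (fst ` {z. T z \<noteq> 0}) \<times> (snd ` {z. T z \<noteq> 0})"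
    proof
      fix z assume zs: "z \<in> {z. T' z \<noteq> 0}"
      obtain a b where z: "z = (a,b)" by (cases z)
      have "T' (a,b) \<noteq> 0" using zs z by simp
      then have "T (a,b) \<noteq> 0 \<or> (T (a0,b) \<noteq> 0 \<and> T (a,b0) \<noteq> 0)" unfolding T'1 by auto
      then show "z \<in> {z. T z \<noteq> 0} \<union> (fst ` {z. T z \<noteq> 0}) \<times> (snd ` {z. T z \<noteq> 0})"
      proof
        assume "T (a,b) \<noteq> 0" then show ?thesis unfolding z by simp
      next
        assume h: "T (a0,b) \<noteq> 0 \<and> T (a,b0) \<noteq> 0"
        have "a \<in> fst ` {z. T z \<noteq> 0}" by (rule image_eqI[where x="(a,b0)"]) (use h in auto)
        moreover have "b \<in> snd ` {z. T z \<noteq> 0}" by (rule image_eqI[where x="(a0,b)"]) (use h in auto)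
        ultimately show ?thesis unfolding z by simp
      qed
    qed
    have finT': "finite {z. T' z \<noteq> 0}"
      by (rule finite_subset[OF supp]) (use less.prems(2) in simp)
    have rowsub: "fst ` {z. T' z \<noteq> 0} \<subseteq> fst ` {z. T z \<noteq> 0} - {a0}"
    proof
      fix a assume "a \<in> fst ` {z. T' z \<noteq> 0}"
      then obtain b where b: "T' (a,b) \<noteq> 0" by auto
      then have "T (a,b) \<noteq> 0 \<or> T (a,b0) \<noteq> 0" unfolding T'1 by auto
      then have "a \<in> fst ` {z. T z \<noteq> 0}"
      proof
        assume "T (a,b) \<noteq> 0" then show ?thesis by (intro image_eqI[where x="(a,b)"]) auto
      next
        assume "T (a,b0) \<noteq> 0" then show ?thesis by (intro image_eqI[where x="(a,b0)"]) auto
      qed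
      moreover have "a \<noteq> a0" using b ab unfolding T'1 t_def by auto
      ultimately show "a \<in> fst ` {z. T z \<noteq> 0} - {a0}" by auto
    qed
    have a0in: "a0 \<in> fst ` {z. T z \<noteq> 0}" using ab by (intro image_eqI[where x="(a0,b0)"]) auto
    have finF: "finite (fst ` {z. T z \<noteq> 0})" using less.prems(2) by simp
    have "card (fst ` {z. T' z \<noteq> 0}) \<le> card (fst ` {z. T z \<noteq> 0} - {a0})"
      by (rule card_mono[OF _ rowsub]) (use finF in simp)
    also have "\<dots> < card (fst ` {z. T z \<noteq> 0})" by (rule card_Diff1_less[OF finF a0in])
    finally have "card (fst ` {z. T' z \<noteq> 0}) < n" using less.prems(1) by simp
    then have IH: "T' \<in> fv.span {tensor x y | x y. x \<in> U \<and> y \<in> V}"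
      using less.hyps finT' cols rows by blast
    have "tensor (\<lambda>a. T (a,b0)) (\<lambda>b. T (a0,b)) \<in> fv.span {tensor x y | x y. x \<in> U \<and> y \<in> V}"
      using less.prems(3,4) by (intro tens_gen) auto
    then have sc: "(\<lambda>z. (1/t) * tensor (\<lambda>a. T (a,b0)) (\<lambda>b. T (a0,b)) z) \<in> fv.span {tensor x y | x y. x \<in> U \<and> y \<in> V}"
      by (rule fv.span_scale)
    have "T = T' + (\<lambda>z. (1/t) * tensor (\<lambda>a. T (a,b0)) (\<lambda>b. T (a0,b)) z)"
      unfolding T'_def tensor_def using ab by (auto simp: fun_eq_iff t_def field_simps)
    then show ?thesis using fv.span_add[OF IH sc] by simp
  qed
qed

lemma lemmaG:
  fixes T :: "'a \<times> 'b \<Rightarrow> 'k::field"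
  assumes "fv.subspace U" "fv.subspace V" "finite {z. T z \<noteq> 0}"
    "\<And>b. (\<lambda>a. T (a,b)) \<in> U" "\<And>a. (\<lambda>b. T (a,b)) \<in> V"
  shows "T \<in> fv.span {tensor x y | x y. x \<in> U \<and> y \<in> V}"
  using lemmaG_aux[OF assms(1,2) refl assms(3)] assms(4,5) by blast

definition bv :: "nat \<times> nat \<Rightarrow> nat \<times> nat \<Rightarrow> 'k::field" where
  "bv a = (\<lambda>b. if b = a then 1 else 0)"

lemma carrier_iff: "x \<in> carrier_H H \<longleftrightarrow> (\<forall>n k. hdim H n \<le> k \<longrightarrow> x (n,k) = 0) \<and> finite {a. x a \<noteq> 0}"
  unfolding carrier_H_def valid_idx_def by (auto simp: not_less)

lemma carrierD1: "x \<in> carrier_H H \<Longrightarrow> hdim H n \<le> k \<Longrightarrow> x (n,k) = 0"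
  by (simp add: carrier_iff)

lemma carrier_bound: "x \<in> carrier_H H \<Longrightarrow> \<exists>M. \<forall>n k. M < n \<longrightarrow> x (n,k) = 0"
proof -
  assume "x \<in> carrier_H H"
  then have "finite (fst ` {a. x a \<noteq> 0})" by (simp add: carrier_iff)
  then obtain M where M: "\<forall>n\<in>fst ` {a. x a \<noteq> 0}. n \<le> M" using finite_nat_set_iff_bounded_le by blast
  show ?thesis
  proof (intro exI allI impI)
    fix n k assume "M < n"
    show "x (n,k) = 0"
    proof (rule ccontr)
      assume "x (n,k) \<noteq> 0"
      then have "n \<in> fst ` {a. x a \<noteq> 0}" by (intro image_eqI[where x="(n,k)"]) auto
      then show False using M \<open>M < n\<close> by auto
    qed
  qed
qed

lemma carrierI:
  assumes "\<And>n k. hdim H n \<le> k \<Longrightarrow> x (n,k) = 0" "\<And>n k. M < n \<Longrightarrow> x (n,k) = 0"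
  shows "x \<in> carrier_H H"
proof -
  have "{a. x a \<noteq> 0} \<subseteq> Sigma {..M} (\<lambda>n. {..<hdim H n})"
  proof
    fix a assume "a \<in> {a. x a \<noteq> 0}"
    moreover obtain n k where a: "a = (n,k)" by (cases a)
    ultimately have "x (n,k) \<noteq> 0" by simp
    then have "\<not> M < n" "\<not> hdim H n \<le> k" using assms by blast+
    then show "a \<in> Sigma {..M} (\<lambda>n. {..<hdim H n})" unfolding a by simp
  qed
  moreover have "finite (Sigma {..M} (\<lambda>n. {..<hdim H n}))" by auto
  ultimately have "finite {a. x a \<noteq> 0}" by (rule finite_subset)
  then show ?thesis using assms(1) by (simp add: carrier_iff)
qed

lemma sub_carrier: "fv.subspace (carrier_H H)"
proof (unfold fv.subspace_def, intro conjI ballI allI)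
  show "0 \<in> carrier_H H" by (simp add: carrier_iff zero_fun_def)
next
  fix x y assume x: "x \<in> carrier_H H" and y: "y \<in> carrier_H H"
  obtain M1 where M1: "\<forall>n k. M1 < n \<longrightarrow> x (n,k) = 0" using carrier_bound[OF x] by blast
  obtain M2 where M2: "\<forall>n k. M2 < n \<longrightarrow> y (n,k) = 0" using carrier_bound[OF y] by blast
  show "x + y \<in> carrier_H H"
    by (rule carrierI[where M="max M1 M2"]) (use x y M1 M2 in \<open>auto simp: carrierD1\<close>)
next
  fix c x assume x: "x \<in> carrier_H H"
  obtain M1 where M1: "\<forall>n k. M1 < n \<longrightarrow> x (n,k) = 0" using carrier_bound[OF x] by blast
  show "(\<lambda>a. c * x a) \<in> carrier_H H"
    by (rule carrierI[where M="M1"]) (use x M1 in \<open>auto simp: carrierD1\<close>)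
qed

lemma hcomp_iff: "x \<in> hcomp H n \<longleftrightarrow> x \<in> carrier_H H \<and> (\<forall>m i. m \<noteq> n \<longrightarrow> x (m,i) = 0)"
  unfolding hcomp_def by simp

lemma sub_hcomp: "fv.subspace (hcomp H n)"
proof (unfold fv.subspace_def, intro conjI ballI allI)
  have sc: "fv.subspace (carrier_H H)" by (rule sub_carrier)
  show "0 \<in> hcomp H n" using fv.subspace_0[OF sc] by (simp add: hcomp_iff)
  fix x y assume "x \<in> hcomp H n" "y \<in> hcomp H n"
  then show "x + y \<in> hcomp H n" using fv.subspace_add[OF sc] by (simp add: hcomp_iff)
next
  have sc: "fv.subspace (carrier_H H)" by (rule sub_carrier)
  fix c x assume "x \<in> hcomp H n"
  then show "(\<lambda>a. c * x a) \<in> hcomp H n" using fv.subspace_scale[OF sc] by (simp add: hcomp_iff)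
qed

lemma gdual_simps[simp]: "hdim (gdual H) = hdim H" "hmu (gdual H) = hde H" "hde (gdual H) = hmu H"
  "hun (gdual H) = hcu H" "hcu (gdual H) = hun H"
  by (simp_all add: gdual_def)

lemma carrier_gdual[simp]: "carrier_H (gdual H) = carrier_H H"
  unfolding carrier_H_def valid_idx_def by simp

lemma hcomp_gdual[simp]: "hcomp (gdual H) n = hcomp H n"
  unfolding hcomp_def by simp

lemma bv_hcomp: "k < hdim H n \<Longrightarrow> bv (n,k) \<in> hcomp H n"
  unfolding hcomp_iff by (intro conjI carrierI[where M=n]) (auto simp: bv_def)

lemma bv_carrier: "k < hdim H n \<Longrightarrow> bv (n,k) \<in> carrier_H H"
  using bv_hcomp hcomp_iff by blast

lemma carrier_expand: "x \<in> carrier_H H \<Longrightarrow> x = (\<Sum>a\<in>{a. x a \<noteq> 0}. (\<lambda>b. x a * bv a b))"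
  unfolding carrier_iff by (auto simp: fun_eq_iff sum_fun_app bv_def if_distrib cong: if_cong)

lemma mult_eval: "mult H x y (n,k) = (if k < hdim H n then
   (\<Sum>p\<le>n. \<Sum>i<hdim H p. \<Sum>j<hdim H (n-p). x (p,i) * y (n-p,j) * hmu H p i (n-p) j k) else 0)"
  by (simp add: mult_def mult_t_def tensor_def)

lemma mult_add_l: "mult H (x + x') y = mult H x y + mult H x' y"
  by (auto simp: fun_eq_iff mult_eval algebra_simps sum.distrib)

lemma mult_add_r: "mult H y (x + x') = mult H y x + mult H y x'"
  by (auto simp: fun_eq_iff mult_eval algebra_simps sum.distrib)

lemma mult_scale_l: "mult H (\<lambda>a. c * x a) y = (\<lambda>a. c * mult H x y a)"
  by (auto simp: fun_eq_iff mult_eval algebra_simps sum_distrib_left)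

lemma mult_scale_r: "mult H y (\<lambda>a. c * x a) = (\<lambda>a. c * mult H y x a)"
  by (auto simp: fun_eq_iff mult_eval algebra_simps sum_distrib_left)

lemma mult_zero_l: "mult H 0 y = 0"
  by (auto simp: fun_eq_iff mult_eval)

lemma mult_zero_r: "mult H y 0 = 0"
  by (auto simp: fun_eq_iff mult_eval)

lemma mult_zero_l': "mult H (\<lambda>a. 0) y = (\<lambda>a. 0)"
  by (auto simp: fun_eq_iff mult_eval)

lemma mult_zero_r': "mult H y (\<lambda>a. 0) = (\<lambda>a. 0)"
  by (auto simp: fun_eq_iff mult_eval)

lemma mult_add_l': "mult H (\<lambda>a. x a + x' a) y = (\<lambda>a. mult H x y a + mult H x' y a)"
  by (auto simp: fun_eq_iff mult_eval algebra_simps sum.distrib)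

lemma mult_add_r': "mult H y (\<lambda>a. x a + x' a) = (\<lambda>a. mult H y x a + mult H y x' a)"
  by (auto simp: fun_eq_iff mult_eval algebra_simps sum.distrib)

lemma mult_sum_l: "mult H (\<Sum>a\<in>S. f a) y = (\<Sum>a\<in>S. mult H (f a) y)"
  by (induct S rule: infinite_finite_induct) (auto simp: mult_zero_l' mult_add_l')

lemma mult_sum_r: "mult H y (\<Sum>a\<in>S. f a) = (\<Sum>a\<in>S. mult H y (f a))"
  by (induct S rule: infinite_finite_induct) (auto simp: mult_zero_r' mult_add_r')

lemma mult_carrier:
  assumes x: "x \<in> carrier_H H" and y: "y \<in> carrier_H H"
  shows "mult H x y \<in> carrier_H H"
proof -
  obtain M1 where M1: "\<forall>n k. M1 < n \<longrightarrow> x (n,k) = 0" using carrier_bound[OF x] by blast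
  obtain M2 where M2: "\<forall>n k. M2 < n \<longrightarrow> y (n,k) = 0" using carrier_bound[OF y] by blast
  show ?thesis
  proof (rule carrierI[where M="M1+M2"])
    fix n k assume "hdim H n \<le> k" then show "mult H x y (n,k) = 0" by (simp add: mult_eval)
  next
    fix n k assume n: "M1 + M2 < n"
    have z: "x (p,i) * y (n-p,j) * c = 0" if "p \<le> n" for p i j c
    proof (cases "p \<le> M1")
      case True then have "M2 < n - p" using n that by linarith
      then show ?thesis using M2 by simp
    next
      case False then show ?thesis using M1 by simp
    qed
    show "mult H x y (n,k) = 0" by (simp add: mult_eval z)
  qed
qed

lemma mult_hcomp:
  assumes x: "x \<in> hcomp H a" and y: "y \<in> hcomp H b"
  shows "mult H x y \<in> hcomp H (a+b)"
  unfolding hcomp_iff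
proof (intro conjI allI impI)
  show "mult H x y \<in> carrier_H H" using x y by (intro mult_carrier) (auto simp: hcomp_iff)
next
  fix m i assume m: "m \<noteq> a + b"
  have z: "x (p,i') * y (m-p,j) * c = 0" if "p \<le> m" for p i' j c
  proof (cases "p = a")
    case True then have "m - p \<noteq> b" using m that by linarith
    then show ?thesis using y by (simp add: hcomp_iff)
  next
    case False then show ?thesis using x by (simp add: hcomp_iff)
  qed
  show "mult H x y (m,i) = 0" by (simp add: mult_eval z)
qed

lemma mult_bv: "mult H (bv (p,i)) (bv (q,j)) (m,k) =
   (if m = p+q \<and> k < hdim H m \<and> i < hdim H p \<and> j < hdim H q then hmu H p i q j k else 0)"
proof (cases "k < hdim H m")
  case False then show ?thesis by (simp add: mult_eval)
next
  case True
  have "mult H (bv (p,i)) (bv (q,j)) (m,k) =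
    (\<Sum>p'\<le>m. \<Sum>i'<hdim H p'. \<Sum>j'<hdim H (m-p'). bv (p,i) (p',i') * bv (q,j) (m-p',j') * hmu H p' i' (m-p') j' k)"
    using True by (simp add: mult_eval)
  also have "\<dots> = (\<Sum>p'\<le>m. if p' = p then (\<Sum>i'<hdim H p'. \<Sum>j'<hdim H (m-p'). bv (p,i) (p',i') * bv (q,j) (m-p',j') * hmu H p' i' (m-p') j' k) else 0)"
    by (rule sum.cong) (auto simp: bv_def)
  also have "\<dots> = (if p \<le> m then (\<Sum>i'<hdim H p. \<Sum>j'<hdim H (m-p). bv (p,i) (p,i') * bv (q,j) (m-p,j') * hmu H p i' (m-p) j' k) else 0)"
    by (simp add: sum.delta')
  also have "\<dots> = (if p \<le> m then (\<Sum>i'<hdim H p. if i' = i then (\<Sum>j'<hdim H (m-p). bv (q,j) (m-p,j') * hmu H p i' (m-p) j' k) else 0) else 0)"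
    by (rule if_cong[OF refl _ refl], rule sum.cong[OF refl]) (simp add: bv_def)
  also have "\<dots> = (if p \<le> m \<and> i < hdim H p then (\<Sum>j'<hdim H (m-p). bv (q,j) (m-p,j') * hmu H p i (m-p) j' k) else 0)"
    by (simp add: sum.delta')
  also have "\<dots> = (if p \<le> m \<and> i < hdim H p then (\<Sum>j'<hdim H (m-p). if j' = j then (if m - p = q then hmu H p i (m-p) j' k else 0) else 0) else 0)"
    by (rule if_cong[OF refl _ refl], rule sum.cong[OF refl]) (auto simp: bv_def)
  also have "\<dots> = (if m = p+q \<and> k < hdim H m \<and> i < hdim H p \<and> j < hdim H q then hmu H p i q j k else 0)"
    using True by (auto simp: sum.delta')
  finally show ?thesis .
qed

lemma comul_eval: "comul H v ((p,i),(q,j)) = (if i < hdim H p \<and> j < hdim H q then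
    (\<Sum>k<hdim H (p+q). v (p+q,k) * hde H p i q j k) else 0)"
  by (simp add: comul_def)

lemma comul_zero_deg:
  assumes "\<And>k. v (p+q,k) = 0" shows "comul H v ((p,i),(q,j)) = 0"
  using assms by (simp add: comul_eval)

lemma comul_fin:
  assumes x: "x \<in> carrier_H H" shows "finite {z. comul H x z \<noteq> 0}"
proof -
  obtain M where M: "\<forall>n k. M < n \<longrightarrow> x (n,k) = 0" using carrier_bound[OF x] by blast
  define S where "S = Sigma {..M} (\<lambda>n. {..<hdim H n})"
  have "{z. comul H x z \<noteq> 0} \<subseteq> S \<times> S"
  proof
    fix z assume z: "z \<in> {z. comul H x z \<noteq> 0}"
    obtain p i q j where zz: "z = ((p,i),(q,j))" by (metis prod.exhaust)
    have ne: "comul H x ((p,i),(q,j)) \<noteq> 0" using z zz by simp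
    then have ij: "i < hdim H p" "j < hdim H q" by (auto simp: comul_eval split: if_splits)
    have "p + q \<le> M"
    proof (rule ccontr)
      assume "\<not> p + q \<le> M"
      then have "comul H x ((p,i),(q,j)) = 0" using M by (intro comul_zero_deg) auto
      then show False using ne by simp
    qed
    then show "z \<in> S \<times> S" using ij unfolding zz S_def by auto
  qed
  moreover have "finite (S \<times> S)" unfolding S_def by auto
  ultimately show ?thesis by (rule finite_subset)
qed

lemma comul_col_carrier:
  assumes x: "x \<in> carrier_H H" shows "(\<lambda>a. comul H x (a,b)) \<in> carrier_H H"
proof -
  obtain M where M: "\<forall>n k. M < n \<longrightarrow> x (n,k) = 0" using carrier_bound[OF x] by blast
  obtain q j where b: "b = (q,j)" by (cases b)
  show ?thesis unfolding b
  proof (rule carrierI[where M=M])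
    fix n k assume "hdim H n \<le> k" then show "comul H x ((n,k),(q,j)) = 0" by (simp add: comul_eval)
  next
    fix n k assume "M < n" then show "comul H x ((n,k),(q,j)) = 0" using M by (intro comul_zero_deg) auto
  qed
qed

lemma comul_row_carrier:
  assumes x: "x \<in> carrier_H H" shows "(\<lambda>b. comul H x (a,b)) \<in> carrier_H H"
proof -
  obtain M where M: "\<forall>n k. M < n \<longrightarrow> x (n,k) = 0" using carrier_bound[OF x] by blast
  obtain p i where a: "a = (p,i)" by (cases a)
  show ?thesis unfolding a
  proof (rule carrierI[where M=M])
    fix n k assume "hdim H n \<le> k" then show "comul H x ((p,i),(n,k)) = 0" by (simp add: comul_eval)
  next
    fix n k assume "M < n" then show "comul H x ((p,i),(n,k)) = 0" using M by (intro comul_zero_deg) auto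
  qed
qed

lemma zero_carrier[simp]: "(\<lambda>a. 0) \<in> carrier_H H"
  by (simp add: carrier_iff)

lemma restrict_carrier: "f \<in> carrier_H H \<Longrightarrow> (\<lambda>a. if P a then f a else 0) \<in> carrier_H H"
  unfolding carrier_iff by (auto elim: finite_subset[rotated])

lemma restrict_carrier': "f \<in> carrier_H H \<Longrightarrow> (\<lambda>a. if P a then 0 else f a) \<in> carrier_H H"
  unfolding carrier_iff by (auto elim: finite_subset[rotated])

lemma restrict_hcomp: "f \<in> carrier_H H \<Longrightarrow> (\<lambda>a. if fst a = n then f a else 0) \<in> hcomp H n"
  unfolding hcomp_iff by (auto intro: restrict_carrier)

section \<open>Coradical filtration, first step\<close>

lemma corad1_char:
  assumes cor: "coradical H = hcomp H 0"
  shows "x \<in> corad_filt H 1 \<longleftrightarrow> x \<in> carrier_H H \<and>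
    (\<forall>p q i j. 0 < p \<longrightarrow> 0 < q \<longrightarrow> comul H x ((p,i),(q,j)) = 0)"
proof
  assume x1: "x \<in> corad_filt H 1"
  then have x: "x \<in> carrier_H H" and
    xs: "comul H x \<in> ssum (tens_span (carrier_H H) (hcomp H 0)) (tens_span (hcomp H 0) (carrier_H H))"
    using cor by auto
  from xs obtain s t where st: "s \<in> tens_span (carrier_H H) (hcomp H 0)" "t \<in> tens_span (hcomp H 0) (carrier_H H)"
    "comul H x = (\<lambda>z. s z + t z)" unfolding ssum_def by blast
  show "x \<in> carrier_H H \<and> (\<forall>p q i j. 0 < p \<longrightarrow> 0 < q \<longrightarrow> comul H x ((p,i),(q,j)) = 0)"
  proof (intro conjI allI impI x)
    fix p q i j :: nat assume pq: "0 < p" "0 < q"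
    have "(\<lambda>b. s ((p,i),b)) \<in> hcomp H 0" using st(1) unfolding tens_span_eq by (rule row_in[OF _ sub_hcomp])
    then have "s ((p,i),(q,j)) = 0" using pq by (simp add: hcomp_iff)
    moreover have "(\<lambda>a. t (a,(q,j))) \<in> hcomp H 0" using st(2) unfolding tens_span_eq by (rule col_in[OF _ sub_hcomp])
    then have "t ((p,i),(q,j)) = 0" using pq by (simp add: hcomp_iff)
    ultimately show "comul H x ((p,i),(q,j)) = 0" using st(3) by (simp add: fun_eq_iff)
  qed
next
  assume "x \<in> carrier_H H \<and> (\<forall>p q i j. 0 < p \<longrightarrow> 0 < q \<longrightarrow> comul H x ((p,i),(q,j)) = 0)"
  then have x: "x \<in> carrier_H H" and h: "\<And>p q i j. 0 < p \<Longrightarrow> 0 < q \<Longrightarrow> comul H x ((p,i),(q,j)) = 0" by auto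
  define s where "s = (\<lambda>z. if fst (snd z) = 0 then comul H x z else 0)"
  define t where "t = (\<lambda>z. if fst (snd z) = 0 then 0 else comul H x z)"
  have fin: "finite {z. comul H x z \<noteq> 0}" by (rule comul_fin[OF x])
  have "s \<in> tens_span (carrier_H H) (hcomp H 0)" unfolding tens_span_eq
  proof (rule lemmaG[OF sub_carrier sub_hcomp])
    show "finite {z. s z \<noteq> 0}" by (rule finite_subset[OF _ fin]) (auto simp: s_def)
  next
    fix b show "(\<lambda>a. s (a,b)) \<in> carrier_H H"
      unfolding s_def using comul_col_carrier[OF x, of b] sub_carrier
      by (cases "fst b = 0") auto
  next
    fix a show "(\<lambda>b. s (a,b)) \<in> hcomp H 0"
      unfolding s_def using restrict_hcomp[OF comul_row_carrier[OF x], of 0 a] by simp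
  qed
  moreover have "t \<in> tens_span (hcomp H 0) (carrier_H H)" unfolding tens_span_eq
  proof (rule lemmaG[OF sub_hcomp sub_carrier])
    show "finite {z. t z \<noteq> 0}" by (rule finite_subset[OF _ fin]) (auto simp: t_def)
  next
    fix b
    have "(\<lambda>a. t (a,b)) = (\<lambda>a. if fst a = 0 then (if fst b = 0 then 0 else comul H x (a,b)) else 0)"
    proof
      fix a :: "nat \<times> nat"
      obtain p i where a: "a = (p,i)" by (cases a)
      obtain q j where b: "b = (q,j)" by (cases b)
      show "t (a,b) = (if fst a = 0 then (if fst b = 0 then 0 else comul H x (a,b)) else 0)"
        unfolding t_def a b using h[of p q i j] by auto
    qed
    moreover have "(\<lambda>a. if fst b = 0 then 0 else comul H x (a,b)) \<in> carrier_H H"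
      using comul_col_carrier[OF x, of b] sub_carrier
      by (cases "fst b = 0") auto
    ultimately show "(\<lambda>a. t (a,b)) \<in> hcomp H 0" using restrict_hcomp by fastforce
  next
    fix a show "(\<lambda>b. t (a,b)) \<in> carrier_H H"
      unfolding t_def using restrict_carrier'[OF comul_row_carrier[OF x], of "\<lambda>b. fst b = 0" a]
      by simp
  qed
  moreover have "comul H x = (\<lambda>z. s z + t z)" by (auto simp: fun_eq_iff s_def t_def)
  ultimately have "comul H x \<in> ssum (tens_span (carrier_H H) (hcomp H 0)) (tens_span (hcomp H 0) (carrier_H H))"
    unfolding ssum_def by blast
  then show "x \<in> corad_filt H 1" using x cor by simp
qed

definition INJ :: "('k::field) hopf_data \<Rightarrow> bool" where
  "INJ H \<longleftrightarrow> (\<forall>n c. 2 \<le> n \<longrightarrow> (\<forall>p i j. 0 < p \<longrightarrow> p < n \<longrightarrow> i < hdim H p \<longrightarrow> j < hdim H (n-p) \<longrightarrow>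
      (\<Sum>k<hdim H n. c k * hde H p i (n-p) j k) = 0) \<longrightarrow> (\<forall>k<hdim H n. c k = 0))"

lemma S01: "ssum (hcomp H 0) (hcomp H 1) = {x \<in> carrier_H H. \<forall>m i. 2 \<le> m \<longrightarrow> x (m,i) = 0}"
proof
  show "ssum (hcomp H 0) (hcomp H 1) \<subseteq> {x \<in> carrier_H H. \<forall>m i. 2 \<le> m \<longrightarrow> x (m,i) = 0}"
  proof
    fix x assume "x \<in> ssum (hcomp H 0) (hcomp H 1)"
    then obtain a b where ab: "a \<in> hcomp H 0" "b \<in> hcomp H 1" "x = (\<lambda>z. a z + b z)" unfolding ssum_def by blast
    have "a + b \<in> carrier_H H" by (intro fv.subspace_add[OF sub_carrier]) (use ab in \<open>auto simp: hcomp_iff\<close>)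
    then have "x \<in> carrier_H H" using ab(3) by (simp add: plus_fun_def)
    moreover have "\<forall>m i. 2 \<le> m \<longrightarrow> x (m,i) = 0" using ab by (auto simp: hcomp_iff)
    ultimately show "x \<in> {x \<in> carrier_H H. \<forall>m i. 2 \<le> m \<longrightarrow> x (m,i) = 0}" by simp
  qed
next
  show "{x \<in> carrier_H H. \<forall>m i. 2 \<le> m \<longrightarrow> x (m,i) = 0} \<subseteq> ssum (hcomp H 0) (hcomp H 1)"
  proof
    fix x assume x: "x \<in> {x \<in> carrier_H H. \<forall>m i. 2 \<le> m \<longrightarrow> x (m,i) = 0}"
    define a where "a = (\<lambda>z. if fst z = 0 then x z else 0)"
    define b where "b = (\<lambda>z. if fst z = 0 then 0 else x z)"
    have "a \<in> hcomp H 0" unfolding a_def using x by (intro restrict_hcomp) auto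
    moreover have "b \<in> hcomp H 1" unfolding hcomp_iff
    proof (intro conjI allI impI)
      show "b \<in> carrier_H H" unfolding b_def using x by (intro restrict_carrier') auto
      fix m i :: nat assume "m \<noteq> 1" then show "b (m,i) = 0" using x unfolding b_def by auto
    qed
    moreover have "x = (\<lambda>z. a z + b z)" by (auto simp: a_def b_def fun_eq_iff)
    ultimately show "x \<in> ssum (hcomp H 0) (hcomp H 1)" unfolding ssum_def by blast
  qed
qed

lemma cg_iff:
  assumes cor: "coradical H = hcomp H 0"
  shows "coradically_graded H \<longleftrightarrow> INJ H"
proof
  assume "coradically_graded H"
  then have eq: "corad_filt H 1 = {x \<in> carrier_H H. \<forall>m i. 2 \<le> m \<longrightarrow> x (m,i) = 0}"
    unfolding coradically_graded_def S01 by (simp add: cor)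
  show "INJ H" unfolding INJ_def
  proof (rule allI, rule allI, rule impI, rule impI)
    fix n c assume n2: "2 \<le> (n::nat)" and hyp: "\<forall>p i j. 0 < p \<longrightarrow> p < n \<longrightarrow> i < hdim H p \<longrightarrow> j < hdim H (n-p) \<longrightarrow>
      (\<Sum>k<hdim H n. c k * hde H p i (n-p) j k) = 0"
    define x where "x = (\<lambda>z. if fst z = n \<and> snd z < hdim H n then c (snd z) else 0)"
    have xc: "x \<in> carrier_H H" by (rule carrierI[where M=n]) (auto simp: x_def)
    have "x \<in> corad_filt H 1" unfolding corad1_char[OF cor]
    proof (intro conjI allI impI xc)
      fix p q i j :: nat assume pq: "0 < p" "0 < q"
      show "comul H x ((p,i),(q,j)) = 0"
      proof (cases "p + q = n")
        case True
        then have q: "q = n - p" "p < n" using pq by auto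
        show ?thesis
        proof (cases "i < hdim H p \<and> j < hdim H q")
          case True
          then have "(\<Sum>k<hdim H n. c k * hde H p i (n-p) j k) = 0" using hyp q pq by auto
          moreover have "(\<Sum>k<hdim H n. x (n,k) * hde H p i (n-p) j k) = (\<Sum>k<hdim H n. c k * hde H p i (n-p) j k)"
            by (rule sum.cong) (auto simp: x_def)
          ultimately show ?thesis using \<open>p + q = n\<close> q by (simp add: comul_eval)
        next
          case False then show ?thesis unfolding comul_eval by auto
        qed
      next
        case False then show ?thesis by (intro comul_zero_deg) (simp add: x_def)
      qed
    qed
    then have "\<forall>m i. 2 \<le> m \<longrightarrow> x (m,i) = 0" using eq by blast
    then have all: "\<forall>k. x (n,k) = 0" using n2 by blast
    show "\<forall>k<hdim H n. c k = 0"
    proof (intro allI impI)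
      fix k assume "k < hdim H n"
      have "x (n,k) = 0" using all by blast
      then show "c k = 0" using \<open>k < hdim H n\<close> unfolding x_def by simp
    qed
  qed
next
  assume inj: "INJ H"
  have "corad_filt H 1 = {x \<in> carrier_H H. \<forall>m i. 2 \<le> m \<longrightarrow> x (m,i) = 0}"
  proof (intro set_eqI iffI)
    fix x assume "x \<in> corad_filt H 1"
    then have x: "x \<in> carrier_H H" and h: "\<And>p q i j. 0 < p \<Longrightarrow> 0 < q \<Longrightarrow> comul H x ((p,i),(q,j)) = 0"
      unfolding corad1_char[OF cor] by auto
    have "x (m,i) = 0" if m: "2 \<le> m" for m i
    proof (cases "i < hdim H m")
      case True
      have I: "\<And>n c. 2 \<le> n \<Longrightarrow> (\<forall>p i j. 0 < p \<longrightarrow> p < n \<longrightarrow> i < hdim H p \<longrightarrow> j < hdim H (n-p) \<longrightarrow>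
          (\<Sum>k<hdim H n. c k * hde H p i (n-p) j k) = 0) \<Longrightarrow> (\<forall>k<hdim H n. c k = 0)"
        using inj unfolding INJ_def by blast
      have hyp: "\<forall>p i j. 0 < p \<longrightarrow> p < m \<longrightarrow> i < hdim H p \<longrightarrow> j < hdim H (m-p) \<longrightarrow>
          (\<Sum>k<hdim H m. x (m,k) * hde H p i (m-p) j k) = 0"
      proof (intro allI impI)
        fix p i j assume "0 < p" "p < m" "i < hdim H p" "j < hdim H (m-p)"
        then show "(\<Sum>k<hdim H m. x (m,k) * hde H p i (m-p) j k) = 0"
          using h[of p "m-p" i j] by (simp add: comul_eval)
      qed
      have "\<forall>k<hdim H m. x (m,k) = 0" by (rule I[OF m hyp])
      then show ?thesis using True by simp
    next
      case False then show ?thesis using x by (simp add: carrierD1)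
    qed
    then show "x \<in> {x \<in> carrier_H H. \<forall>m i. 2 \<le> m \<longrightarrow> x (m,i) = 0}" using x by simp
  next
    fix x assume "x \<in> {x \<in> carrier_H H. \<forall>m i. 2 \<le> m \<longrightarrow> x (m,i) = 0}"
    then show "x \<in> corad_filt H 1" unfolding corad1_char[OF cor]
      by (auto intro!: comul_zero_deg)
  qed
  then show "coradically_graded H" unfolding coradically_graded_def S01 using cor by simp
qed

section \<open>Rows and surjectivity\<close>

definition rowv :: "('k::field) hopf_data \<Rightarrow> nat \<Rightarrow> nat \<Rightarrow> nat \<Rightarrow> nat \<Rightarrow> nat \<Rightarrow> 'k" where
  "rowv H n p i j = (\<lambda>k. if k < hdim H n then hmu H p i (n-p) j k else 0)"

definition Rows :: "('k::field) hopf_data \<Rightarrow> nat \<Rightarrow> (nat \<Rightarrow> 'k) set" where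
  "Rows H n = {rowv H n p i j | p i j. 0 < p \<and> p < n \<and> i < hdim H p \<and> j < hdim H (n-p)}"

definition unitv :: "nat \<Rightarrow> nat \<Rightarrow> 'k::field" where
  "unitv k = (\<lambda>l. if l = k then 1 else 0)"

definition SURJ :: "('k::field) hopf_data \<Rightarrow> bool" where
  "SURJ H \<longleftrightarrow> (\<forall>n k. 2 \<le> n \<longrightarrow> k < hdim H n \<longrightarrow> unitv k \<in> fv.span (Rows H n))"

lemma dot_subspace: "fv.subspace {r. dot F c r = (0::'k::field)}"
  unfolding fv.subspace_def dot_def
  by (auto simp: algebra_simps sum.distrib sum_distrib_left[symmetric])

lemma dot_span: "r \<in> fv.span R \<Longrightarrow> (\<And>r. r \<in> R \<Longrightarrow> dot F c r = 0) \<Longrightarrow> dot F c r = (0::'k::field)"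
  using fv.span_induct[where P="\<lambda>r. dot F c r = 0", OF _ dot_subspace] by blast

lemma dot_unitv: "finite F \<Longrightarrow> k \<in> F \<Longrightarrow> dot F c (unitv k) = c k"
  unfolding dot_def unitv_def by (simp add: if_distrib sum.delta' cong: if_cong)

lemma dot_rowv: "dot {..<hdim H n} c (rowv H n p i j) = (\<Sum>k<hdim H n. c k * hmu H p i (n-p) j k)"
  unfolding dot_def rowv_def by (rule sum.cong) auto

lemma INJ_dual_iff: "INJ (gdual H) \<longleftrightarrow> SURJ H"
proof
  assume inj: "INJ (gdual H)"
  have I: "\<And>n c. 2 \<le> n \<Longrightarrow> (\<forall>p i j. 0 < p \<longrightarrow> p < n \<longrightarrow> i < hdim H p \<longrightarrow> j < hdim H (n-p) \<longrightarrow>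
          (\<Sum>k<hdim H n. c k * hmu H p i (n-p) j k) = 0) \<Longrightarrow> (\<forall>k<hdim H n. c k = 0)"
    using inj unfolding INJ_def by simp
  show "SURJ H" unfolding SURJ_def
  proof (intro allI impI)
    fix n k assume n: "2 \<le> n" and k: "k < hdim H n"
    show "unitv k \<in> fv.span (Rows H n)"
    proof (rule ccontr)
      assume nin: "unitv k \<notin> fv.span (Rows H n)"
      have "\<exists>c. (\<forall>r\<in>Rows H n. dot {..<hdim H n} c r = 0) \<and> dot {..<hdim H n} c (unitv k) \<noteq> 0"
      proof (rule LA1[OF _ _ _ nin])
        show "\<forall>r\<in>Rows H n. \<forall>y. y \<notin> {..<hdim H n} \<longrightarrow> r y = 0" unfolding Rows_def rowv_def by auto
        show "\<forall>y. y \<notin> {..<hdim H n} \<longrightarrow> unitv k y = 0" using k unfolding unitv_def by auto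
      qed simp
      then obtain c where c: "\<forall>r\<in>Rows H n. dot {..<hdim H n} c r = 0" "dot {..<hdim H n} c (unitv k) \<noteq> 0" by blast
      have "\<forall>k<hdim H n. c k = 0"
      proof (rule I[OF n], intro allI impI)
        fix p i j assume "0 < p" "p < n" "i < hdim H p" "j < hdim H (n-p)"
        then have "rowv H n p i j \<in> Rows H n" unfolding Rows_def by blast
        then show "(\<Sum>k<hdim H n. c k * hmu H p i (n-p) j k) = 0" using c(1) dot_rowv by metis
      qed
      then show False using c(2) k by (simp add: dot_unitv)
    qed
  qed
next
  assume surj: "SURJ H"
  show "INJ (gdual H)" unfolding INJ_def gdual_simps
  proof (rule allI, rule allI, rule impI, rule impI)
    fix n c assume n: "2 \<le> (n::nat)" and hyp: "\<forall>p i j. 0 < p \<longrightarrow> p < n \<longrightarrow> i < hdim H p \<longrightarrow> j < hdim H (n-p) \<longrightarrow>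
      (\<Sum>k<hdim H n. c k * hmu H p i (n-p) j k) = 0"
    have R: "dot {..<hdim H n} c r = 0" if "r \<in> Rows H n" for r
      using that hyp unfolding Rows_def by (auto simp: dot_rowv)
    show "\<forall>k<hdim H n. c k = 0"
    proof (intro allI impI)
      fix k assume k: "k < hdim H n"
      have "unitv k \<in> fv.span (Rows H n)" using surj n k unfolding SURJ_def by blast
      then have "dot {..<hdim H n} c (unitv k) = 0" using R by (rule dot_span)
      then show "c k = 0" using k by (simp add: dot_unitv)
    qed
  qed
qed

section \<open>Generation in degrees 0 and 1\<close>

lemma span_image_sub:
  assumes "v \<in> fv.span S" "fv.subspace T" "\<And>s. s \<in> S \<Longrightarrow> f s \<in> T"
    "\<And>x y. f (x + y) = f x + f y" "\<And>c x. f (\<lambda>a. c * x a) = (\<lambda>a. c * f x a)" "f 0 = 0"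
  shows "f v \<in> T"
proof -
  have "fv.subspace {v. f v \<in> T}"
    unfolding fv.subspace_def using assms(2,4,5,6) unfolding fv.subspace_def by auto
  then show ?thesis using fv.span_induct[where P="\<lambda>v. f v \<in> T", OF assms(1)] assms(3) by blast
qed

definition E :: "('k::field) hopf_data \<Rightarrow> nat \<Rightarrow> (nat \<Rightarrow> 'k) \<Rightarrow> nat \<times> nat \<Rightarrow> 'k" where
  "E H n w = (\<lambda>z. if fst z = n \<and> snd z < hdim H n then w (snd z) else 0)"

definition Co :: "('k::field) hopf_data \<Rightarrow> nat \<Rightarrow> (nat \<times> nat \<Rightarrow> 'k) \<Rightarrow> nat \<Rightarrow> 'k" where
  "Co H n v = (\<lambda>l. if l < hdim H n then v (n,l) else 0)"

definition prj :: "nat \<Rightarrow> (nat \<times> nat \<Rightarrow> 'k::field) \<Rightarrow> nat \<times> nat \<Rightarrow> 'k" where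
  "prj n x = (\<lambda>z. if fst z = n then x z else 0)"

definition Gens :: "('k::field) hopf_data \<Rightarrow> nat \<Rightarrow> (nat \<times> nat \<Rightarrow> 'k) set" where
  "Gens H n = {mult H (bv (p,i)) (bv (n-p,j)) | p i j. 0 < p \<and> p < n \<and> i < hdim H p \<and> j < hdim H (n-p)}"

lemma E_unitv: "k < hdim H n \<Longrightarrow> E H n (unitv k) = bv (n,k)"
  by (auto simp: E_def unitv_def bv_def fun_eq_iff)

lemma E_rowv: "p \<le> n \<Longrightarrow> E H n (rowv H n p i j) = mult H (bv (p,i)) (bv (n-p,j))"
  if "i < hdim H p" "j < hdim H (n-p)"
  using that by (auto simp: E_def rowv_def fun_eq_iff mult_bv)

lemma Co_bv: "k < hdim H n \<Longrightarrow> Co H n (bv (n,k)) = unitv k"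
  by (auto simp: Co_def unitv_def bv_def fun_eq_iff)

lemma Co_gen: "p \<le> n \<Longrightarrow> Co H n (mult H (bv (p,i)) (bv (n-p,j))) = rowv H n p i j"
  if "i < hdim H p" "j < hdim H (n-p)"
  using that by (auto simp: Co_def rowv_def fun_eq_iff mult_bv)

lemma SURJ_gen:
  assumes surj: "SURJ H"
  shows "generated_by_01 H"
  unfolding generated_by_01_def
proof (intro allI impI)
  fix A assume "subalgebra H A \<and> hcomp H 0 \<union> hcomp H 1 \<subseteq> A"
  then have Ac: "A \<subseteq> carrier_H H" and As: "fv.subspace A" and Am: "\<And>x y. x \<in> A \<Longrightarrow> y \<in> A \<Longrightarrow> mult H x y \<in> A"
    and A01: "hcomp H 0 \<subseteq> A" "hcomp H 1 \<subseteq> A"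
    unfolding subalgebra_def subspace_iff by auto
  have bvA: "\<forall>k. k < hdim H n \<longrightarrow> bv (n,k) \<in> A" for n
  proof (induct n rule: less_induct)
    case (less n)
    show ?case
    proof (intro allI impI)
      fix k assume k: "k < hdim H n"
      show "bv (n,k) \<in> A"
      proof (cases "n < 2")
        case True
        then have "n = 0 \<or> n = 1" by auto
        then show ?thesis using bv_hcomp[OF k] A01 by auto
      next
        case False
        then have "unitv k \<in> fv.span (Rows H n)" using surj k unfolding SURJ_def by auto
        then have "E H n (unitv k) \<in> A"
        proof (rule span_image_sub[OF _ As])
          fix r assume "r \<in> Rows H n"
          then obtain p i j where r: "r = rowv H n p i j" "0 < p" "p < n" "i < hdim H p" "j < hdim H (n-p)"
            unfolding Rows_def by blast
          have "bv (p,i) \<in> A" using less r by auto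
          moreover have "bv (n-p,j) \<in> A" using less r by auto
          ultimately show "E H n r \<in> A" unfolding r(1) using r by (simp add: E_rowv Am)
        qed (auto simp: E_def fun_eq_iff)
        then show ?thesis using k by (simp add: E_unitv)
      qed
    qed
  qed
  show "A = carrier_H H"
  proof
    show "carrier_H H \<subseteq> A"
    proof
      fix x assume x: "x \<in> carrier_H H"
      have "(\<Sum>a\<in>{a. x a \<noteq> 0}. (\<lambda>b. x a * bv a b)) \<in> A"
      proof (rule fv.subspace_sum[OF As])
        fix a assume "a \<in> {a. x a \<noteq> 0}"
        then have "snd a < hdim H (fst a)" using carrierD1[OF x, of "fst a" "snd a"] by (cases "snd a < hdim H (fst a)") auto
        then have "bv a \<in> A" using bvA[of "fst a"] by (cases a) auto
        then show "(\<lambda>b. x a * bv a b) \<in> A" using fv.subspace_scale[OF As] by blast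
      qed
      then show "x \<in> A" using carrier_expand[OF x] by simp
    qed
  qed (rule Ac)
qed

lemma mult_span:
  assumes u: "u \<in> fv.span S" and v: "v \<in> fv.span T"
  shows "mult H u v \<in> fv.span {mult H s t | s t. s \<in> S \<and> t \<in> T}"
proof -
  let ?G = "{mult H s t | s t. s \<in> S \<and> t \<in> T}"
  have L: "mult H s v \<in> fv.span ?G" if s: "s \<in> S" for s
  proof (rule span_image_sub[where f="mult H s", OF v fv.subspace_span])
    fix t assume "t \<in> T" then show "mult H s t \<in> fv.span ?G" using s by (intro fv.span_base) blast
  qed (auto simp: mult_add_r mult_scale_r mult_zero_r)
  show ?thesis
    by (rule span_image_sub[where f="\<lambda>u. mult H u v", OF u fv.subspace_span])
       (auto simp: mult_add_l mult_scale_l mult_zero_l L)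
qed

definition Bas :: "('k::field) hopf_data \<Rightarrow> nat \<Rightarrow> (nat \<times> nat \<Rightarrow> 'k) set" where
  "Bas H n = {bv (n,k) | k. k < hdim H n}"

lemma hcomp_span: "x \<in> hcomp H n \<Longrightarrow> x \<in> fv.span (Bas H n)"
proof -
  assume x: "x \<in> hcomp H n"
  then have xc: "x \<in> carrier_H H" by (simp add: hcomp_iff)
  have "(\<Sum>a\<in>{a. x a \<noteq> 0}. (\<lambda>b. x a * bv a b)) \<in> fv.span (Bas H n)"
  proof (rule fv.span_sum, rule fv.span_scale, rule fv.span_base)
    fix a assume a: "a \<in> {a. x a \<noteq> 0}"
    obtain m k where mk: "a = (m,k)" by (cases a)
    have "m = n" using a x mk by (auto simp: hcomp_iff)
    moreover have "k < hdim H m" using a mk carrierD1[OF xc, of m k] by (cases "k < hdim H m") auto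
    ultimately show "bv a \<in> Bas H n" unfolding Bas_def mk by blast
  qed
  then show ?thesis using carrier_expand[OF xc] by simp
qed

lemma mult_hcomp_Gens:
  assumes "0 < p" "p < n" "u \<in> hcomp H p" "v \<in> hcomp H (n-p)"
  shows "mult H u v \<in> fv.span (Gens H n)"
proof -
  have "mult H u v \<in> fv.span {mult H s t | s t. s \<in> Bas H p \<and> t \<in> Bas H (n-p)}"
    using assms by (intro mult_span hcomp_span)
  also have "\<dots> \<subseteq> fv.span (Gens H n)"
    by (rule fv.span_mono) (use assms in \<open>auto simp: Bas_def Gens_def\<close>)
  finally show ?thesis .
qed

lemma Gens_carrier: "g \<in> Gens H n \<Longrightarrow> \<exists>p i j. g = mult H (bv (p,i)) (bv (n-p,j)) \<and> 0 < p \<and> p < n \<and>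
   bv (p,i) \<in> hcomp H p \<and> bv (n-p,j) \<in> hcomp H (n-p)"
  unfolding Gens_def by (auto intro: bv_hcomp)

lemma mult_Gens_l:
  assumes assoc: "\<And>u v w. u \<in> carrier_H H \<Longrightarrow> v \<in> carrier_H H \<Longrightarrow> w \<in> carrier_H H \<Longrightarrow>
     mult H (mult H u v) w = mult H u (mult H v w)"
    and w: "w \<in> hcomp H 0" and v: "v \<in> fv.span (Gens H n)"
  shows "mult H w v \<in> fv.span (Gens H n)"
proof (rule span_image_sub[where f="mult H w", OF v fv.subspace_span])
  fix g assume "g \<in> Gens H n"
  then obtain p i j where g: "g = mult H (bv (p,i)) (bv (n-p,j))" "0 < p" "p < n"
    "bv (p,i) \<in> hcomp H p" "bv (n-p,j) \<in> hcomp H (n-p)" using Gens_carrier by blast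
  have "mult H w g = mult H (mult H w (bv (p,i))) (bv (n-p,j))"
    unfolding g(1) using w g(4,5) by (intro assoc[symmetric]) (auto simp: hcomp_iff)
  moreover have "mult H w (bv (p,i)) \<in> hcomp H p" using mult_hcomp[OF w g(4)] by simp
  ultimately show "mult H w g \<in> fv.span (Gens H n)" using g by (simp add: mult_hcomp_Gens)
qed (auto simp: mult_add_r mult_scale_r mult_zero_r)

lemma mult_Gens_r:
  assumes assoc: "\<And>u v w. u \<in> carrier_H H \<Longrightarrow> v \<in> carrier_H H \<Longrightarrow> w \<in> carrier_H H \<Longrightarrow>
     mult H (mult H u v) w = mult H u (mult H v w)"
    and w: "w \<in> hcomp H 0" and v: "v \<in> fv.span (Gens H n)"
  shows "mult H v w \<in> fv.span (Gens H n)"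
proof (rule span_image_sub[where f="\<lambda>v. mult H v w", OF v fv.subspace_span])
  fix g assume "g \<in> Gens H n"
  then obtain p i j where g: "g = mult H (bv (p,i)) (bv (n-p,j))" "0 < p" "p < n"
    "bv (p,i) \<in> hcomp H p" "bv (n-p,j) \<in> hcomp H (n-p)" using Gens_carrier by blast
  have "mult H g w = mult H (bv (p,i)) (mult H (bv (n-p,j)) w)"
    unfolding g(1) using w g(4,5) by (intro assoc) (auto simp: hcomp_iff)
  moreover have "mult H (bv (n-p,j)) w \<in> hcomp H (n-p)" using mult_hcomp[OF g(5) w] by simp
  ultimately show "mult H g w \<in> fv.span (Gens H n)" using g by (simp add: mult_hcomp_Gens)
qed (auto simp: mult_add_l mult_scale_l mult_zero_l)

lemma prj_hcomp: "x \<in> carrier_H H \<Longrightarrow> prj n x \<in> hcomp H n"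
  unfolding prj_def by (rule restrict_hcomp)

lemma mult_prj_eval:
  assumes "p \<le> n"
  shows "mult H (prj p x) (prj (n-p) y) (n,l) = (if l < hdim H n then
    (\<Sum>i<hdim H p. \<Sum>j<hdim H (n-p). x (p,i) * y (n-p,j) * hmu H p i (n-p) j l) else 0)"
proof -
  have "mult H (prj p x) (prj (n-p) y) (n,l) = (if l < hdim H n then (\<Sum>p'\<le>n.
     if p' = p then (\<Sum>i<hdim H p'. \<Sum>j<hdim H (n-p'). x (p',i) * y (n-p',j) * hmu H p' i (n-p') j l) else 0) else 0)"
    unfolding mult_eval
  proof (rule if_cong[OF refl _ refl], rule sum.cong[OF refl])
    fix p' assume "p' \<in> {..n}"
    then have "p' \<le> n" by simp
    then show "(\<Sum>i<hdim H p'. \<Sum>j<hdim H (n-p'). prj p x (p',i) * prj (n-p) y (n-p',j) * hmu H p' i (n-p') j l) =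
      (if p' = p then (\<Sum>i<hdim H p'. \<Sum>j<hdim H (n-p'). x (p',i) * y (n-p',j) * hmu H p' i (n-p') j l) else 0)"
      using assms by (auto simp: prj_def)
  qed
  then show ?thesis using assms by (simp add: sum.delta')
qed

lemma mult_prj_decomp:
  assumes x: "x \<in> carrier_H H" and y: "y \<in> carrier_H H"
  shows "prj n (mult H x y) = (\<Sum>p\<le>n. mult H (prj p x) (prj (n-p) y))"
proof
  fix z :: "nat \<times> nat"
  obtain m l where z: "z = (m,l)" by (cases z)
  show "prj n (mult H x y) z = (\<Sum>p\<le>n. mult H (prj p x) (prj (n-p) y)) z"
  proof (cases "m = n")
    case True
    have "(\<Sum>p\<le>n. mult H (prj p x) (prj (n-p) y)) (n,l) = (\<Sum>p\<le>n. mult H (prj p x) (prj (n-p) y) (n,l))"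
      by (rule sum_fun_app)
    also have "\<dots> = (\<Sum>p\<le>n. if l < hdim H n then
      (\<Sum>i<hdim H p. \<Sum>j<hdim H (n-p). x (p,i) * y (n-p,j) * hmu H p i (n-p) j l) else 0)"
      by (rule sum.cong[OF refl], rule mult_prj_eval) simp
    also have "\<dots> = mult H x y (n,l)"
      by (cases "l < hdim H n") (simp_all only: mult_eval if_True if_False sum.neutral_const)
    finally show ?thesis unfolding z True prj_def by simp
  next
    case False
    have "(\<Sum>p\<le>n. mult H (prj p x) (prj (n-p) y)) (m,l) = (\<Sum>p\<le>n. mult H (prj p x) (prj (n-p) y) (m,l))"
      by (rule sum_fun_app)
    also have "\<dots> = 0"
    proof (rule sum.neutral, rule ballI)
      fix p assume "p \<in> {..n}"
      then have "mult H (prj p x) (prj (n-p) y) \<in> hcomp H n"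
        using mult_hcomp[OF prj_hcomp[OF x] prj_hcomp[OF y], of p "n-p"] by simp
      then show "mult H (prj p x) (prj (n-p) y) (m,l) = 0" using False by (simp add: hcomp_iff)
    qed
    finally show ?thesis unfolding z prj_def using False by simp
  qed
qed

lemma one_hcomp: "one H \<in> hcomp H 0"
  unfolding hcomp_iff by (intro conjI carrierI[where M=0]) (auto simp: one_def)

lemma prj_add: "prj n (x + y) = prj n x + prj n y"
  by (auto simp: prj_def fun_eq_iff)

lemma prj_scale: "prj n (\<lambda>a. c * x a) = (\<lambda>a. c * prj n x a)"
  by (auto simp: prj_def fun_eq_iff)

lemma prj_zero: "prj n 0 = 0"
  by (auto simp: prj_def fun_eq_iff)

lemma prj_other: "x \<in> hcomp H m \<Longrightarrow> m \<noteq> n \<Longrightarrow> prj n x = 0"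
  by (auto simp: prj_def fun_eq_iff hcomp_iff)

lemma prj_bv: "prj n (bv (n,k)) = bv (n,k)"
  by (auto simp: prj_def bv_def fun_eq_iff)

lemma gen_SURJ:
  assumes assoc: "\<And>u v w. u \<in> carrier_H H \<Longrightarrow> v \<in> carrier_H H \<Longrightarrow> w \<in> carrier_H H \<Longrightarrow>
     mult H (mult H u v) w = mult H u (mult H v w)"
    and gen: "generated_by_01 H"
  shows "SURJ H"
proof -
  define A where "A = {x \<in> carrier_H H. \<forall>n. 2 \<le> n \<longrightarrow> prj n x \<in> fv.span (Gens H n)}"
  have sA: "fv.subspace A"
    unfolding fv.subspace_def
  proof (intro conjI ballI allI)
    show "0 \<in> A" unfolding A_def using fv.subspace_0[OF sub_carrier]
      by (simp add: prj_zero fv.span_zero)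
  next
    fix x y assume "x \<in> A" "y \<in> A"
    then show "x + y \<in> A" unfolding A_def
      by (auto simp: prj_add intro: fv.span_add fv.subspace_add[OF sub_carrier])
  next
    fix c x assume "x \<in> A"
    then show "(\<lambda>a. c * x a) \<in> A" unfolding A_def
      by (auto simp: prj_scale intro: fv.span_scale fv.subspace_scale[OF sub_carrier])
  qed
  have "subalgebra H A" unfolding subalgebra_def subspace_iff
  proof (intro conjI ballI sA)
    show "A \<subseteq> carrier_H H" unfolding A_def by auto
  next
    show "one H \<in> A" unfolding A_def using one_hcomp[of H]
      by (auto simp: hcomp_iff prj_other[OF one_hcomp] fv.span_zero)
  next
    fix x y assume x: "x \<in> A" and y: "y \<in> A"
    have xc: "x \<in> carrier_H H" and yc: "y \<in> carrier_H H" using x y unfolding A_def by auto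
    show "mult H x y \<in> A" unfolding A_def
    proof (intro CollectI conjI allI impI mult_carrier xc yc)
      fix n :: nat assume n: "2 \<le> n"
      show "prj n (mult H x y) \<in> fv.span (Gens H n)"
        unfolding mult_prj_decomp[OF xc yc]
      proof (rule fv.span_sum)
        fix p assume "p \<in> {..n}"
        then have p: "p \<le> n" by simp
        show "mult H (prj p x) (prj (n-p) y) \<in> fv.span (Gens H n)"
        proof (cases "p = 0")
          case True
          have "prj n y \<in> fv.span (Gens H n)" using y n unfolding A_def by auto
          then show ?thesis using True by (simp add: mult_Gens_l[OF assoc prj_hcomp[OF xc]])
        next
          case False
          show ?thesis
          proof (cases "p = n")
            case True
            have "prj n x \<in> fv.span (Gens H n)" using x n unfolding A_def by auto
            then show ?thesis using True by (simp add: mult_Gens_r[OF assoc prj_hcomp[OF yc]])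
          next
            case False
            then show ?thesis using \<open>p \<noteq> 0\<close> p prj_hcomp[OF xc, of p] prj_hcomp[OF yc, of "n-p"]
              by (intro mult_hcomp_Gens) auto
          qed
        qed
      qed
    qed
  qed
  moreover have "hcomp H 0 \<union> hcomp H 1 \<subseteq> A"
  proof
    fix x assume x: "x \<in> hcomp H 0 \<union> hcomp H 1"
    then have "x \<in> carrier_H H" by (auto simp: hcomp_iff)
    moreover have "prj n x = 0" if "2 \<le> n" for n
      using x that by (auto intro: prj_other)
    ultimately show "x \<in> A" unfolding A_def by (auto simp: fv.span_zero)
  qed
  ultimately have Aeq: "A = carrier_H H" using gen unfolding generated_by_01_def by blast
  show "SURJ H" unfolding SURJ_def
  proof (intro allI impI)
    fix n k assume n: "2 \<le> n" and k: "k < hdim H n"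
    have "bv (n,k) \<in> A" using Aeq bv_carrier[OF k] by simp
    then have "prj n (bv (n,k)) \<in> fv.span (Gens H n)" using n unfolding A_def by auto
    then have bvG: "bv (n,k) \<in> fv.span (Gens H n)" by (simp add: prj_bv)
    have "Co H n (bv (n,k)) \<in> fv.span (Rows H n)"
    proof (rule span_image_sub[OF bvG fv.subspace_span])
      fix g assume "g \<in> Gens H n"
      then obtain p i j where g: "g = mult H (bv (p,i)) (bv (n-p,j))" "0 < p" "p < n" "i < hdim H p" "j < hdim H (n-p)"
        unfolding Gens_def by blast
      have "Co H n g = rowv H n p i j" unfolding g(1) using g by (intro Co_gen) auto
      moreover have "rowv H n p i j \<in> Rows H n" using g unfolding Rows_def by blast
      ultimately show "Co H n g \<in> fv.span (Rows H n)" by (simp add: fv.span_base)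
    qed (auto simp: Co_def fun_eq_iff)
    then show "unitv k \<in> fv.span (Rows H n)" using k by (simp add: Co_bv)
  qed
qed


section \<open>Associativity of the dual\<close>

definition Bv :: "('k::field) hopf_data \<Rightarrow> (nat \<times> nat \<Rightarrow> 'k) set" where
  "Bv H = {bv (n,k) | n k. k < hdim H n}"

lemma carrier_span: "x \<in> carrier_H H \<Longrightarrow> x \<in> fv.span (Bv H)"
proof -
  assume x: "x \<in> carrier_H H"
  have "(\<Sum>a\<in>{a. x a \<noteq> 0}. (\<lambda>b. x a * bv a b)) \<in> fv.span (Bv H)"
  proof (rule fv.span_sum, rule fv.span_scale, rule fv.span_base)
    fix a assume a: "a \<in> {a. x a \<noteq> 0}"
    obtain m k where mk: "a = (m,k)" by (cases a)
    have "k < hdim H m" using a mk carrierD1[OF x, of m k] by (cases "k < hdim H m") auto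
    then show "bv a \<in> Bv H" unfolding Bv_def mk by blast
  qed
  then show ?thesis using carrier_expand[OF x] by simp
qed

lemma eq_span:
  assumes "x \<in> fv.span S" "\<And>s. s \<in> S \<Longrightarrow> f s = g s"
    "\<And>x y. f (\<lambda>a. x a + y a) = (\<lambda>a. f x a + f y a)" "\<And>c x. f (\<lambda>a. c * x a) = (\<lambda>a. c * f x a)" "f (\<lambda>a. 0) = (\<lambda>a. 0)"
    "\<And>x y. g (\<lambda>a. x a + y a) = (\<lambda>a. g x a + g y a)" "\<And>c x. g (\<lambda>a. c * x a) = (\<lambda>a. c * g x a)" "g (\<lambda>a. 0) = (\<lambda>a. 0)"
  shows "f x = g x"
proof -
  have "fv.subspace {x. f x = g x}"
    unfolding fv.subspace_def plus_fun_def zero_fun_def using assms(3-8) by auto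
  then show ?thesis using fv.span_induct[where P="\<lambda>x. f x = g x", OF assms(1)] assms(2) by blast
qed

lemma sum_bv: "(\<Sum>k'<M. bv (n,k) (m,k') * f k') = (if m = n \<and> k < M then f k else 0)"
proof -
  have "(\<Sum>k'<M. bv (n,k) (m,k') * f k') = (\<Sum>k'<M. if k' = k then (if m = n then f k' else 0) else 0)"
    by (rule sum.cong) (auto simp: bv_def)
  then show ?thesis by (simp add: sum.delta')
qed

lemma sum_bv': "(\<Sum>k'<M. f k' * bv (n,k) (m,k')) = (if m = n \<and> k < M then f k else 0)"
proof -
  have "(\<Sum>k'<M. f k' * bv (n,k) (m,k')) = (\<Sum>k'<M. if k' = k then (if m = n then f k' else 0) else 0)"
    by (rule sum.cong) (auto simp: bv_def)
  then show ?thesis by (simp add: sum.delta')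
qed

lemma sum_bv2: "(\<Sum>k'<M. f k' * bv (m,k') (n,k)) = (if m = n \<and> k < M then f k else 0)"
proof -
  have "(\<Sum>k'<M. f k' * bv (m,k') (n,k)) = (\<Sum>k'<M. if k' = k then (if m = n then f k' else 0) else 0)"
    by (rule sum.cong) (auto simp: bv_def)
  then show ?thesis by (simp add: sum.delta')
qed

lemma BA_assoc:
  assumes BA: "\<And>a b c. a \<in> Bv H \<Longrightarrow> b \<in> Bv H \<Longrightarrow> c \<in> Bv H \<Longrightarrow> mult H (mult H a b) c = mult H a (mult H b c)"
    and u: "u \<in> carrier_H H" and v: "v \<in> carrier_H H" and w: "w \<in> carrier_H H"
  shows "mult H (mult H u v) w = mult H u (mult H v w)"
proof -
  have S1: "mult H (mult H a b) w = mult H a (mult H b w)" if "a \<in> Bv H" "b \<in> Bv H" for a b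
    by (rule eq_span[where f="\<lambda>w. mult H (mult H a b) w" and g="\<lambda>w. mult H a (mult H b w)", OF carrier_span[OF w]])
       (auto simp: BA that mult_add_r' mult_scale_r mult_zero_r')
  have S2: "mult H (mult H a v) w = mult H a (mult H v w)" if "a \<in> Bv H" for a
    by (rule eq_span[where f="\<lambda>v. mult H (mult H a v) w" and g="\<lambda>v. mult H a (mult H v w)", OF carrier_span[OF v]])
       (auto simp: S1 that mult_add_r' mult_scale_r mult_zero_r' mult_add_l' mult_scale_l mult_zero_l')
  show ?thesis
    by (rule eq_span[where f="\<lambda>u. mult H (mult H u v) w" and g="\<lambda>u. mult H u (mult H v w)", OF carrier_span[OF u]])
       (auto simp: S2 mult_add_l' mult_scale_l mult_zero_l')
qed

lemma comul_bv: "comul H (bv (n,k)) ((p,i),(q,j)) =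
   (if i < hdim H p \<and> j < hdim H q \<and> p + q = n \<and> k < hdim H n then hde H p i q j k else 0)"
  unfolding comul_eval sum_bv by auto

lemma COA:
  assumes coa: "\<And>v. v \<in> carrier_H H \<Longrightarrow> comul_l H (comul H v) = comul_r H (comul H v)"
    and v: "i < hdim H p" "j < hdim H q" "l < hdim H r" "k < hdim H (p+q+r)"
  shows "(\<Sum>m<hdim H (p+q). hde H p i q j m * hde H (p+q) m r l k) =
         (\<Sum>m<hdim H (q+r). hde H q j r l m * hde H p i (q+r) m k)"
proof -
  let ?n = "p+q+r"
  have "comul_l H (comul H (bv (?n,k))) ((p,i),(q,j),(r,l)) = comul_r H (comul H (bv (?n,k))) ((p,i),(q,j),(r,l))"
    using coa[OF bv_carrier[OF v(4)]] by simp
  moreover have "comul_l H (comul H (bv (?n,k))) ((p,i),(q,j),(r,l)) = (\<Sum>m<hdim H (p+q). hde H p i q j m * hde H (p+q) m r l k)"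
    unfolding comul_l_def using v by (auto simp: comul_bv mult.commute intro!: sum.cong)
  moreover have "comul_r H (comul H (bv (?n,k))) ((p,i),(q,j),(r,l)) = (\<Sum>m<hdim H (q+r). hde H q j r l m * hde H p i (q+r) m k)"
    unfolding comul_r_def using v by (auto simp: comul_bv mult.commute add.assoc intro!: sum.cong)
  ultimately show ?thesis by simp
qed

lemma bvprod_expand: "mult H (bv (p,i)) (bv (q,j)) =
   (\<Sum>m<hdim H (p+q). (\<lambda>z. (if i < hdim H p \<and> j < hdim H q then hmu H p i q j m else 0) * bv (p+q,m) z))"
proof
  fix z :: "nat \<times> nat"
  obtain n k where z: "z = (n,k)" by (cases z)
  show "mult H (bv (p,i)) (bv (q,j)) z = (\<Sum>m<hdim H (p+q). (\<lambda>z. (if i < hdim H p \<and> j < hdim H q then hmu H p i q j m else 0) * bv (p+q,m) z)) z"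
    unfolding z sum_fun_app mult_bv sum_bv2 by auto
qed

lemma BA_L:
  assumes coa: "\<And>v. v \<in> carrier_H H \<Longrightarrow> comul_l H (comul H v) = comul_r H (comul H v)"
    and a: "a \<in> Bv H" and b: "b \<in> Bv H" and c: "c \<in> Bv H"
  shows "mult (gdual H) (mult (gdual H) a b) c = mult (gdual H) a (mult (gdual H) b c)"
proof -
  obtain p i where a': "a = bv (p,i)" "i < hdim H p" using a unfolding Bv_def by blast
  obtain q j where b': "b = bv (q,j)" "j < hdim H q" using b unfolding Bv_def by blast
  obtain r l where c': "c = bv (r,l)" "l < hdim H r" using c unfolding Bv_def by blast
  let ?L = "gdual H"
  show ?thesis
  proof
    fix z :: "nat \<times> nat"
    obtain n k where z: "z = (n,k)" by (cases z)
    have lhs: "mult ?L (mult ?L a b) c (n,k) = (\<Sum>m<hdim H (p+q). hde H p i q j m *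
       (if n = p+q+r \<and> k < hdim H n \<and> m < hdim H (p+q) then hde H (p+q) m r l k else 0))"
      unfolding a'(1) b'(1) c'(1) bvprod_expand[of ?L] mult_sum_l mult_scale_l sum_fun_app
      using a' b' c' by (auto simp: sum_bv2 intro!: sum.cong)
    have rhs: "mult ?L a (mult ?L b c) (n,k) = (\<Sum>m<hdim H (q+r). hde H q j r l m *
       (if n = p+q+r \<and> k < hdim H n \<and> m < hdim H (q+r) then hde H p i (q+r) m k else 0))"
      unfolding a'(1) b'(1) c'(1) bvprod_expand[of ?L] mult_sum_r mult_scale_r sum_fun_app
      using a' b' c' by (auto simp: sum_bv2 add.assoc intro!: sum.cong)
    show "mult ?L (mult ?L a b) c z = mult ?L a (mult ?L b c) z"
    proof (cases "n = p+q+r \<and> k < hdim H n")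
      case True
      then have kk: "k < hdim H (p+q+r)" "n = p+q+r" by auto
      then show ?thesis unfolding z lhs rhs using COA[OF coa a'(2) b'(2) c'(2) kk(1)] by simp
    next
      case False
      then have h: "\<And>P. (n = p + q + r \<and> k < hdim H n \<and> P) = False" by auto
      show ?thesis unfolding z lhs rhs h by simp
    qed
  qed
qed

lemma coassoc_H: "graded_hopf H \<Longrightarrow> v \<in> carrier_H H \<Longrightarrow> comul_l H (comul H v) = comul_r H (comul H v)"
  unfolding graded_hopf_def by blast

lemma gen_iff:
  assumes assoc: "\<And>u v w. u \<in> carrier_H H \<Longrightarrow> v \<in> carrier_H H \<Longrightarrow> w \<in> carrier_H H \<Longrightarrow>
     mult H (mult H u v) w = mult H u (mult H v w)"
  shows "generated_by_01 H \<longleftrightarrow> SURJ H"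
  using gen_SURJ[OF assoc] SURJ_gen by blast

lemma INJ_gdual2: "INJ (gdual (gdual H)) = INJ H"
  unfolding INJ_def by simp

lemma assoc_H: "graded_hopf H \<Longrightarrow> u \<in> carrier_H H \<Longrightarrow> v \<in> carrier_H H \<Longrightarrow> w \<in> carrier_H H \<Longrightarrow>
     mult H (mult H u v) w = mult H u (mult H v w)"
  unfolding graded_hopf_def by blast

lemma assoc_L: "graded_hopf H \<Longrightarrow> u \<in> carrier_H H \<Longrightarrow> v \<in> carrier_H H \<Longrightarrow> w \<in> carrier_H H \<Longrightarrow>
     mult (gdual H) (mult (gdual H) u v) w = mult (gdual H) u (mult (gdual H) v w)"
  by (rule BA_assoc) (auto simp: Bv_def intro: BA_L[OF coassoc_H, unfolded Bv_def])

section \<open>The coradical of the dual\<close>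

lemma unit_H: "graded_hopf H \<Longrightarrow> v \<in> carrier_H H \<Longrightarrow> mult H (one H) v = v \<and> mult H v (one H) = v"
  unfolding graded_hopf_def by blast

lemma one_expand: "one H = (\<Sum>i<hdim H 0. (\<lambda>z. hun H i * bv (0,i) z))"
proof
  fix z :: "nat \<times> nat"
  obtain n k where z: "z = (n,k)" by (cases z)
  show "one H z = (\<Sum>i<hdim H 0. (\<lambda>z. hun H i * bv (0,i) z)) z"
    unfolding z sum_fun_app sum_bv2 by (auto simp: one_def)
qed

lemma unit_coord:
  assumes "graded_hopf H" "j < hdim H q" "k < hdim H q"
  shows "(\<Sum>i<hdim H 0. hun H i * hmu H 0 i q j k) = (if j = k then 1 else 0)"
proof -
  have "mult H (one H) (bv (q,j)) = bv (q,j)" using unit_H[OF assms(1) bv_carrier[OF assms(2)]] by simp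
  then have "mult H (one H) (bv (q,j)) (q,k) = bv (q,j) (q,k)" by simp
  moreover have "mult H (one H) (bv (q,j)) (q,k) = (\<Sum>i<hdim H 0. hun H i * hmu H 0 i q j k)"
    unfolding one_expand mult_sum_l mult_scale_l sum_fun_app mult_bv using assms(2,3)
    by (intro sum.cong) auto
  ultimately show ?thesis by (auto simp: bv_def)
qed

lemma comul_hcomp0:
  assumes "x \<in> hcomp H 0" "p \<noteq> 0 \<or> q \<noteq> 0"
  shows "comul H' x ((p,i),(q,j)) = 0"
  using assms by (intro comul_zero_deg) (auto simp: hcomp_iff)

lemma D1:
  assumes hopf: "graded_hopf H" and C: "simple_subcoalg (gdual H) C"
  shows "C \<subseteq> hcomp H 0"
proof -
  let ?L = "gdual H"
  have Cc: "subcoalg ?L C" and Cne: "C \<noteq> {\<lambda>_. 0}"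
    and Cmin: "\<And>D. subcoalg ?L D \<Longrightarrow> D \<subseteq> C \<Longrightarrow> D = {\<lambda>_. 0} \<or> D = C"
    using C unfolding simple_subcoalg_def by auto
  have Ccar: "C \<subseteq> carrier_H H" and Cs: "fv.subspace C" and Ccom: "\<And>x. x \<in> C \<Longrightarrow> comul ?L x \<in> tens_span C C"
    using Cc unfolding subcoalg_def subspace_iff by auto
  define C' where "C' = C \<inter> hcomp H 0"
  have C's: "fv.subspace C'" unfolding C'_def using Cs sub_hcomp[of H 0]
    unfolding fv.subspace_def by auto
  have C'c: "subcoalg ?L C'"
    unfolding subcoalg_def subspace_iff
  proof (intro conjI ballI C's)
    show "C' \<subseteq> carrier_H ?L" unfolding C'_def using Ccar by auto
  next
    fix x assume x: "x \<in> C'"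
    then have xC: "x \<in> C" and x0: "x \<in> hcomp H 0" unfolding C'_def by auto
    have xc: "x \<in> carrier_H H" using x0 by (simp add: hcomp_iff)
    have T: "comul ?L x \<in> fv.span {tensor x y | x y. x \<in> C \<and> y \<in> C}" using Ccom[OF xC] unfolding tens_span_eq .
    show "comul ?L x \<in> tens_span C' C'" unfolding tens_span_eq
    proof (rule lemmaG[OF C's C's])
      show "finite {z. comul ?L x z \<noteq> 0}" using comul_fin[of x ?L] xc by simp
    next
      fix b :: "nat \<times> nat"
      have "(\<lambda>a. comul ?L x (a,b)) \<in> C" by (rule col_in[OF T Cs])
      moreover have "(\<lambda>a. comul ?L x (a,b)) \<in> hcomp H 0" unfolding hcomp_iff
      proof (intro conjI allI impI)
        show "(\<lambda>a. comul ?L x (a,b)) \<in> carrier_H H" using comul_col_carrier[of x ?L b] xc by simp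
        fix m i :: nat assume "m \<noteq> 0"
        then show "comul ?L x ((m,i),b) = 0" using x0 by (cases b) (auto intro: comul_hcomp0)
      qed
      ultimately show "(\<lambda>a. comul ?L x (a,b)) \<in> C'" unfolding C'_def by auto
    next
      fix a :: "nat \<times> nat"
      have "(\<lambda>b. comul ?L x (a,b)) \<in> C" by (rule row_in[OF T Cs])
      moreover have "(\<lambda>b. comul ?L x (a,b)) \<in> hcomp H 0" unfolding hcomp_iff
      proof (intro conjI allI impI)
        show "(\<lambda>b. comul ?L x (a,b)) \<in> carrier_H H" using comul_row_carrier[of x ?L a] xc by simp
        fix m i :: nat assume "m \<noteq> 0"
        then show "comul ?L x (a,(m,i)) = 0" using x0 by (cases a) (auto intro: comul_hcomp0)
      qed
      ultimately show "(\<lambda>b. comul ?L x (a,b)) \<in> C'" unfolding C'_def by auto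
    qed
  qed
  obtain x where xC: "x \<in> C" and xne: "x \<noteq> (\<lambda>_. 0)"
  proof -
    have "(\<lambda>_. 0) \<in> C" using fv.subspace_0[OF Cs] by (simp add: zero_fun_def)
    then show ?thesis using Cne that by blast
  qed
  have xc: "x \<in> carrier_H H" using xC Ccar by auto
  obtain M where M: "\<forall>n k. M < n \<longrightarrow> x (n,k) = 0" using carrier_bound[OF xc] by blast
  define D where "D = {n. \<exists>k. x (n,k) \<noteq> 0}"
  have "D \<subseteq> {..M}"
  proof
    fix n assume "n \<in> D"
    then obtain k where "x (n,k) \<noteq> 0" unfolding D_def by auto
    then show "n \<in> {..M}" using M by (meson atMost_iff not_le)
  qed
  then have Dfin: "finite D" by (rule finite_subset) simp
  have Dne: "D \<noteq> {}" using xne unfolding D_def by (auto simp: fun_eq_iff)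
  define N where "N = Max D"
  have ND: "N \<in> D" unfolding N_def using Dfin Dne by simp
  then obtain j where xj: "x (N,j) \<noteq> 0" unfolding D_def by auto
  have jN: "j < hdim H N" using xj carrierD1[OF xc, of N j] by (cases "j < hdim H N") auto
  have above: "x (n,k) = 0" if "N < n" for n k
  proof (rule ccontr)
    assume "x (n,k) \<noteq> 0"
    then have "n \<in> D" unfolding D_def by auto
    then have "n \<le> N" unfolding N_def using Dfin by simp
    then show False using that by simp
  qed
  define y where "y = (\<lambda>a. comul ?L x (a,(N,j)))"
  have yC: "y \<in> C" unfolding y_def using Ccom[OF xC] unfolding tens_span_eq by (rule col_in[OF _ Cs])
  have y0: "y \<in> hcomp H 0" unfolding hcomp_iff
  proof (intro conjI allI impI)
    show "y \<in> carrier_H H" unfolding y_def using comul_col_carrier[of x ?L "(N,j)"] xc by simp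
    fix m i :: nat assume "m \<noteq> 0"
    then show "y (m,i) = 0" unfolding y_def using above by (intro comul_zero_deg) auto
  qed
  have "(\<Sum>i<hdim H 0. hun H i * y (0,i)) = (\<Sum>i<hdim H 0. \<Sum>k<hdim H N. x (N,k) * (hun H i * hmu H 0 i N j k))"
    unfolding y_def comul_eval using jN by (auto simp: sum_distrib_left mult_ac intro!: sum.cong)
  also have "\<dots> = (\<Sum>k<hdim H N. x (N,k) * (\<Sum>i<hdim H 0. hun H i * hmu H 0 i N j k))"
    by (subst sum.swap) (simp add: sum_distrib_left)
  also have "\<dots> = (\<Sum>k<hdim H N. x (N,k) * (if j = k then 1 else 0))"
    by (rule sum.cong[OF refl]) (simp add: unit_coord[OF hopf jN])
  also have "\<dots> = (\<Sum>k<hdim H N. if k = j then x (N,k) else 0)" by (rule sum.cong) auto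
  also have "\<dots> = x (N,j)" using jN by (simp add: sum.delta')
  finally have "y \<noteq> (\<lambda>_. 0)" using xj by auto
  then have "C' \<noteq> {\<lambda>_. 0}" using yC y0 unfolding C'_def by auto
  then have "C' = C" using Cmin[OF C'c] unfolding C'_def by auto
  then show ?thesis unfolding C'_def by auto
qed

lemma corL_sub:
  assumes hopf: "graded_hopf H"
  shows "coradical (gdual H) \<subseteq> hcomp H 0"
  unfolding coradical_def lin_span_eq
  by (rule fv.span_minimal[OF _ sub_hcomp]) (use D1[OF hopf] in blast)


definition dot0 :: "('k::field) hopf_data \<Rightarrow> (nat \<times> nat \<Rightarrow> 'k) \<Rightarrow> (nat \<times> nat \<Rightarrow> 'k) \<Rightarrow> 'k" where
  "dot0 H g a = (\<Sum>l<hdim H 0. g (0,l) * a (0,l))"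

definition ann :: "('k::field) hopf_data \<Rightarrow> (nat \<times> nat \<Rightarrow> 'k) set \<Rightarrow> (nat \<times> nat \<Rightarrow> 'k) set" where
  "ann H S = {v \<in> hcomp H 0. \<forall>w\<in>S. dot0 H v w = 0}"

definition ideal2 :: "('k::field) hopf_data \<Rightarrow> (nat \<times> nat \<Rightarrow> 'k) set \<Rightarrow> bool" where
  "ideal2 H I \<longleftrightarrow> I \<subseteq> hcomp H 0 \<and> fv.subspace I \<and>
     (\<forall>a\<in>hcomp H 0. \<forall>x\<in>I. mult H a x \<in> I \<and> mult H x a \<in> I)"

definition maxideal :: "('k::field) hopf_data \<Rightarrow> (nat \<times> nat \<Rightarrow> 'k) set \<Rightarrow> bool" where
  "maxideal H M \<longleftrightarrow> ideal2 H M \<and> M \<noteq> hcomp H 0 \<and> (\<forall>J. ideal2 H J \<longrightarrow> M \<subseteq> J \<longrightarrow> J = M \<or> J = hcomp H 0)"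

lemma dot0_comm: "dot0 H g a = dot0 H a g"
  unfolding dot0_def by (simp add: mult.commute)

lemma dot0_gdual[simp]: "dot0 (gdual H) = dot0 H"
  unfolding dot0_def[abs_def] by simp

lemma dot0_bv: "i < hdim H 0 \<Longrightarrow> dot0 H (bv (0,i)) g = g (0,i)"
  unfolding dot0_def sum_bv by simp

lemma dot0_zero: "dot0 H (\<lambda>_. 0) g = 0"
  unfolding dot0_def by simp

lemma hcomp0_eqI: "g \<in> hcomp H 0 \<Longrightarrow> (\<And>i. i < hdim H 0 \<Longrightarrow> g (0,i) = 0) \<Longrightarrow> g = (\<lambda>_. 0)"
proof
  fix z :: "nat \<times> nat"
  assume g: "g \<in> hcomp H 0" and h: "\<And>i. i < hdim H 0 \<Longrightarrow> g (0,i) = 0"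
  obtain m i where z: "z = (m,i)" by (cases z)
  show "g z = 0" unfolding z
  proof (cases "m = 0")
    case True
    then show "g (m,i) = 0" using h carrierD1[of g H 0 i] g by (cases "i < hdim H 0") (auto simp: hcomp_iff)
  next
    case False then show "g (m,i) = 0" using g by (simp add: hcomp_iff)
  qed
qed

lemma LA1':
  assumes S: "S \<subseteq> hcomp H 0" and v: "v \<in> hcomp H 0" and nin: "v \<notin> fv.span S"
  shows "\<exists>c\<in>hcomp H 0. (\<forall>s\<in>S. dot0 H c s = 0) \<and> dot0 H c v \<noteq> 0"
proof -
  let ?F = "Pair 0 ` {..<hdim H 0}"
  have van: "\<forall>y. y \<notin> ?F \<longrightarrow> w y = 0" if w: "w \<in> hcomp H 0" for w
  proof (intro allI impI)
    fix y :: "nat \<times> nat" assume y: "y \<notin> ?F"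
    obtain m l where yy: "y = (m,l)" by (cases y)
    show "w y = 0"
    proof (cases "m = 0")
      case True
      then have "\<not> l < hdim H 0" using y yy by auto
      then show ?thesis using w True yy by (auto simp: hcomp_iff carrierD1)
    next
      case False then show ?thesis using w yy by (simp add: hcomp_iff)
    qed
  qed
  have dF: "dot ?F c w = dot0 H c w" for c w
    unfolding dot_def dot0_def by (subst sum.reindex) (auto simp: inj_on_def)
  obtain c where c: "\<forall>r\<in>S. dot ?F c r = 0" "dot ?F c v \<noteq> 0"
    using LA1[of ?F S v] van S v nin by blast
  define c' where "c' = (\<lambda>z. if fst z = 0 \<and> snd z < hdim H 0 then c z else 0)"
  have c'0: "c' \<in> hcomp H 0" unfolding hcomp_iff
    by (intro conjI allI impI carrierI[where M=0]) (auto simp: c'_def)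
  have dc': "dot0 H c' w = dot0 H c w" for w unfolding dot0_def c'_def by (rule sum.cong) auto
  show ?thesis using c c'0 by (intro bexI[of _ c']) (auto simp: dc' dF)
qed

lemma mult_eval0: "mult H b a (0,l) = (if l < hdim H 0 then
   (\<Sum>i<hdim H 0. \<Sum>j<hdim H 0. b (0,i) * a (0,j) * hmu H 0 i 0 j l) else 0)"
  by (simp add: mult_eval)

lemma pairing:
  "dot0 H g (mult H b a) = (\<Sum>i<hdim H 0. \<Sum>j<hdim H 0. comul (gdual H) g ((0,i),(0,j)) * b (0,i) * a (0,j))"
proof -
  let ?N = "hdim H 0"
  have "dot0 H g (mult H b a) = (\<Sum>l<?N. \<Sum>i<?N. \<Sum>j<?N. g (0,l) * (b (0,i) * a (0,j) * hmu H 0 i 0 j l))"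
    unfolding dot0_def mult_eval0 by (simp add: sum_distrib_left)
  also have "\<dots> = (\<Sum>i<?N. \<Sum>l<?N. \<Sum>j<?N. g (0,l) * (b (0,i) * a (0,j) * hmu H 0 i 0 j l))"
    by (rule sum.swap)
  also have "\<dots> = (\<Sum>i<?N. \<Sum>j<?N. \<Sum>l<?N. g (0,l) * (b (0,i) * a (0,j) * hmu H 0 i 0 j l))"
    by (rule sum.cong[OF refl], rule sum.swap)
  also have "\<dots> = (\<Sum>i<?N. \<Sum>j<?N. (\<Sum>l<?N. g (0,l) * hmu H 0 i 0 j l) * b (0,i) * a (0,j))"
    by (simp add: sum_distrib_left sum_distrib_right mult_ac)
  also have "\<dots> = (\<Sum>i<?N. \<Sum>j<?N. comul (gdual H) g ((0,i),(0,j)) * b (0,i) * a (0,j))"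
    by (intro sum.cong refl) (simp add: comul_eval)
  finally show ?thesis .
qed

lemma pairing_row:
  "dot0 H g (mult H b a) = (\<Sum>i<hdim H 0. b (0,i) * dot0 H (\<lambda>z. comul (gdual H) g ((0,i),z)) a)"
proof -
  have "dot0 H g (mult H b a) = (\<Sum>i<hdim H 0. \<Sum>j<hdim H 0. comul (gdual H) g ((0,i),(0,j)) * b (0,i) * a (0,j))"
    by (rule pairing)
  also have "\<dots> = (\<Sum>i<hdim H 0. b (0,i) * dot0 H (\<lambda>z. comul (gdual H) g ((0,i),z)) a)"
    unfolding dot0_def by (simp add: sum_distrib_left mult_ac)
  finally show ?thesis .
qed

lemma pairing_col:
  "dot0 H g (mult H b a) = (\<Sum>j<hdim H 0. a (0,j) * dot0 H (\<lambda>z. comul (gdual H) g (z,(0,j))) b)"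
proof -
  have "dot0 H g (mult H b a) = (\<Sum>i<hdim H 0. \<Sum>j<hdim H 0. comul (gdual H) g ((0,i),(0,j)) * b (0,i) * a (0,j))"
    by (rule pairing)
  also have "\<dots> = (\<Sum>j<hdim H 0. \<Sum>i<hdim H 0. comul (gdual H) g ((0,i),(0,j)) * b (0,i) * a (0,j))"
    by (rule sum.swap)
  also have "\<dots> = (\<Sum>j<hdim H 0. a (0,j) * dot0 H (\<lambda>z. comul (gdual H) g (z,(0,j))) b)"
    unfolding dot0_def by (simp add: sum_distrib_left mult_ac)
  finally show ?thesis .
qed

lemma ann_sub: "fv.subspace (ann H S)"
  unfolding fv.subspace_def ann_def
  using sub_hcomp[of H 0] unfolding fv.subspace_def
  by (auto simp: dot0_def algebra_simps sum.distrib sum_distrib_left[symmetric])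

lemma P1:
  assumes Ee: "subcoalg (gdual H) Ee" "Ee \<subseteq> hcomp H 0"
  shows "ideal2 H (ann H Ee)"
  unfolding ideal2_def
proof (intro conjI ballI ann_sub)
  show "ann H Ee \<subseteq> hcomp H 0" unfolding ann_def by auto
  have Es: "fv.subspace Ee" and Ecom: "\<And>x. x \<in> Ee \<Longrightarrow> comul (gdual H) x \<in> fv.span {tensor x y | x y. x \<in> Ee \<and> y \<in> Ee}"
    using Ee unfolding subcoalg_def subspace_iff tens_span_eq by auto
  fix b x assume b: "b \<in> hcomp H 0" and x: "x \<in> ann H Ee"
  then have x0: "x \<in> hcomp H 0" and xE: "\<And>g. g \<in> Ee \<Longrightarrow> dot0 H x g = 0" unfolding ann_def by auto
  have "mult H b x \<in> hcomp H 0" using mult_hcomp[OF b x0] by simp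
  moreover have "dot0 H (mult H b x) g = 0" if g: "g \<in> Ee" for g
  proof -
    have "dot0 H (\<lambda>z. comul (gdual H) g ((0,i),z)) x = 0" for i
      using xE[OF row_in[OF Ecom[OF g] Es]] by (simp add: dot0_comm)
    then show ?thesis by (simp add: dot0_comm[of H "mult H b x"] pairing_row)
  qed
  ultimately show "mult H b x \<in> ann H Ee" unfolding ann_def by auto
  have "mult H x b \<in> hcomp H 0" using mult_hcomp[OF x0 b] by simp
  moreover have "dot0 H (mult H x b) g = 0" if g: "g \<in> Ee" for g
  proof -
    have "dot0 H (\<lambda>z. comul (gdual H) g (z,(0,j))) x = 0" for j
      using xE[OF col_in[OF Ecom[OF g] Es]] by (simp add: dot0_comm)
    then show ?thesis by (simp add: dot0_comm[of H "mult H x b"] pairing_col)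
  qed
  ultimately show "mult H x b \<in> ann H Ee" unfolding ann_def by auto
qed


lemma T_vanish:
  assumes g: "g \<in> hcomp H 0" and ne: "comul (gdual H) g ((p,i),(q,j)) \<noteq> 0"
  shows "p = 0 \<and> q = 0 \<and> i < hdim H 0 \<and> j < hdim H 0"
proof -
  have "\<not> (p \<noteq> 0 \<or> q \<noteq> 0)" using comul_hcomp0[OF g, of p q "gdual H" i j] ne by blast
  then have "p = 0 \<and> q = 0" by simp
  moreover have "i < hdim H p \<and> j < hdim H q" using ne by (auto simp: comul_eval split: if_splits)
  ultimately show ?thesis by simp
qed

lemma P2:
  assumes M: "ideal2 H M"
  shows "subcoalg (gdual H) (ann H M)"
proof -
  have M0: "M \<subseteq> hcomp H 0" and Mid: "\<And>a x. a \<in> hcomp H 0 \<Longrightarrow> x \<in> M \<Longrightarrow> mult H a x \<in> M \<and> mult H x a \<in> M"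
    using M unfolding ideal2_def by auto
  show ?thesis unfolding subcoalg_def subspace_iff
  proof (intro conjI ballI ann_sub)
    show "ann H M \<subseteq> carrier_H (gdual H)" unfolding ann_def by (auto simp: hcomp_iff)
  next
    fix g assume g: "g \<in> ann H M"
    then have g0: "g \<in> hcomp H 0" and gM: "\<And>m. m \<in> M \<Longrightarrow> dot0 H g m = 0" unfolding ann_def by auto
    have gc: "g \<in> carrier_H H" using g0 by (simp add: hcomp_iff)
    show "comul (gdual H) g \<in> tens_span (ann H M) (ann H M)" unfolding tens_span_eq
    proof (rule lemmaG[OF ann_sub ann_sub])
      show "finite {z. comul (gdual H) g z \<noteq> 0}" using comul_fin[of g "gdual H"] gc by simp
    next
      fix b :: "nat \<times> nat"
      obtain q j where b: "b = (q,j)" by (cases b)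
      have c0: "(\<lambda>a. comul (gdual H) g (a,b)) \<in> hcomp H 0" unfolding hcomp_iff
      proof (intro conjI allI impI)
        show "(\<lambda>a. comul (gdual H) g (a,b)) \<in> carrier_H H" using comul_col_carrier[of g "gdual H" b] gc by simp
        fix m i :: nat assume "m \<noteq> 0"
        then show "comul (gdual H) g ((m,i),b) = 0" using g0 b by (auto intro: comul_hcomp0)
      qed
      have "dot0 H (\<lambda>a. comul (gdual H) g (a,b)) m = 0" if m: "m \<in> M" for m
      proof (cases "q = 0 \<and> j < hdim H 0")
        case True
        have bvj: "bv (0,j) \<in> hcomp H 0" using True by (intro bv_hcomp) simp
        have "dot0 H g (mult H m (bv (0,j))) = 0" using gM Mid[OF bvj m] by blast
        moreover have "dot0 H g (mult H m (bv (0,j))) = dot0 H (\<lambda>a. comul (gdual H) g (a,(0,j))) m"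
          unfolding pairing_col sum_bv using True by simp
        ultimately show ?thesis using True b by simp
      next
        case False
        have "(\<lambda>a. comul (gdual H) g (a,b)) = (\<lambda>_. 0)"
        proof
          fix a :: "nat \<times> nat"
          obtain p i where a: "a = (p,i)" by (cases a)
          show "comul (gdual H) g (a,b) = 0" using T_vanish[OF g0, of p i q j] False a b by auto
        qed
        then show ?thesis by (simp add: dot0_zero)
      qed
      then show "(\<lambda>a. comul (gdual H) g (a,b)) \<in> ann H M" using c0 unfolding ann_def by auto
    next
      fix a :: "nat \<times> nat"
      obtain p i where a: "a = (p,i)" by (cases a)
      have c0: "(\<lambda>b. comul (gdual H) g (a,b)) \<in> hcomp H 0" unfolding hcomp_iff
      proof (intro conjI allI impI)
        show "(\<lambda>b. comul (gdual H) g (a,b)) \<in> carrier_H H" using comul_row_carrier[of g "gdual H" a] gc by simp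
        fix m j :: nat assume "m \<noteq> 0"
        then show "comul (gdual H) g (a,(m,j)) = 0" using g0 a by (auto intro: comul_hcomp0)
      qed
      have "dot0 H (\<lambda>b. comul (gdual H) g (a,b)) m = 0" if m: "m \<in> M" for m
      proof (cases "p = 0 \<and> i < hdim H 0")
        case True
        have bvi: "bv (0,i) \<in> hcomp H 0" using True by (intro bv_hcomp) simp
        have "dot0 H g (mult H (bv (0,i)) m) = 0" using gM Mid[OF bvi m] by blast
        moreover have "dot0 H g (mult H (bv (0,i)) m) = dot0 H (\<lambda>b. comul (gdual H) g ((0,i),b)) m"
          unfolding pairing_row sum_bv using True by simp
        ultimately show ?thesis using True a by simp
      next
        case False
        have "(\<lambda>b. comul (gdual H) g (a,b)) = (\<lambda>_. 0)"
        proof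
          fix b :: "nat \<times> nat"
          obtain q j where b: "b = (q,j)" by (cases b)
          show "comul (gdual H) g (a,b) = 0" using T_vanish[OF g0, of p i q j] False a b by auto
        qed
        then show ?thesis by (simp add: dot0_zero)
      qed
      then show "(\<lambda>b. comul (gdual H) g (a,b)) \<in> ann H M" using c0 unfolding ann_def by auto
    qed
  qed
qed

lemma subspace_span_eq: "fv.subspace S \<Longrightarrow> fv.span S = S"
  by (simp add: fv.span_eq_iff)

lemma P3:
  assumes M: "maxideal H M"
  shows "simple_subcoalg (gdual H) (ann H M)"
proof -
  have Mi: "ideal2 H M" and MA: "M \<noteq> hcomp H 0"
    and Mmax: "\<And>J. ideal2 H J \<Longrightarrow> M \<subseteq> J \<Longrightarrow> J = M \<or> J = hcomp H 0"
    using M unfolding maxideal_def by auto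
  have M0: "M \<subseteq> hcomp H 0" and Ms: "fv.subspace M" using Mi unfolding ideal2_def by auto
  have sc: "subcoalg (gdual H) (ann H M)" by (rule P2[OF Mi])
  have ne: "ann H M \<noteq> {\<lambda>_. 0}"
  proof -
    have "\<exists>i<hdim H 0. bv (0,i) \<notin> M"
    proof (rule ccontr)
      assume "\<not> (\<exists>i<hdim H 0. bv (0,i) \<notin> M)"
      then have "Bas H 0 \<subseteq> M" unfolding Bas_def by auto
      then have "fv.span (Bas H 0) \<subseteq> M" using fv.span_minimal Ms by blast
      then have "hcomp H 0 \<subseteq> M" using hcomp_span by blast
      then show False using MA M0 by auto
    qed
    then obtain i where i: "i < hdim H 0" "bv (0,i) \<notin> M" by blast
    have "bv (0,i) \<notin> fv.span M" using i(2) by (simp add: subspace_span_eq[OF Ms])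
    then obtain c where c: "c \<in> hcomp H 0" "\<forall>m\<in>M. dot0 H c m = 0" "dot0 H c (bv (0,i)) \<noteq> 0"
      using LA1'[OF M0 bv_hcomp[OF i(1)]] by blast
    then have "c \<in> ann H M" unfolding ann_def by auto
    moreover have "c \<noteq> (\<lambda>_. 0)" using c(3) by (auto simp: dot0_def)
    ultimately show ?thesis by auto
  qed
  have min: "Ee = {\<lambda>_. 0} \<or> Ee = ann H M" if Ee: "subcoalg (gdual H) Ee" "Ee \<subseteq> ann H M" for Ee
  proof -
    have E0: "Ee \<subseteq> hcomp H 0" using Ee(2) unfolding ann_def by auto
    have Es: "fv.subspace Ee" using Ee(1) unfolding subcoalg_def subspace_iff by auto
    have I: "ideal2 H (ann H Ee)" by (rule P1[OF Ee(1) E0])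
    have MI: "M \<subseteq> ann H Ee"
    proof
      fix m assume m: "m \<in> M"
      have "dot0 H m g = 0" if "g \<in> Ee" for g
        using that Ee(2) m unfolding ann_def by (auto simp: dot0_comm)
      then show "m \<in> ann H Ee" using m M0 unfolding ann_def by auto
    qed
    from Mmax[OF I MI] show ?thesis
    proof
      assume eq: "ann H Ee = M"
      have "ann H M \<subseteq> Ee"
      proof
        fix g assume g: "g \<in> ann H M"
        show "g \<in> Ee"
        proof (rule ccontr)
          assume "g \<notin> Ee"
          then have "g \<notin> fv.span Ee" by (simp add: subspace_span_eq[OF Es])
          moreover have "g \<in> hcomp H 0" using g unfolding ann_def by auto
          ultimately obtain c where c: "c \<in> hcomp H 0" "\<forall>e\<in>Ee. dot0 H c e = 0" "dot0 H c g \<noteq> 0"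
            using LA1'[OF E0] by blast
          then have "c \<in> ann H Ee" unfolding ann_def by auto
          then have "c \<in> M" using eq by simp
          then have "dot0 H g c = 0" using g unfolding ann_def by auto
          then show False using c(3) by (simp add: dot0_comm)
        qed
      qed
      then show ?thesis using Ee(2) by auto
    next
      assume eq: "ann H Ee = hcomp H 0"
      have "Ee \<subseteq> {\<lambda>_. 0}"
      proof
        fix g assume g: "g \<in> Ee"
        have "g (0,i) = 0" if i: "i < hdim H 0" for i
        proof -
          have "bv (0,i) \<in> ann H Ee" using eq bv_hcomp[OF i] by simp
          then have "dot0 H (bv (0,i)) g = 0" using g unfolding ann_def by auto
          then show ?thesis using i by (simp add: dot0_bv)
        qed
        then show "g \<in> {\<lambda>_. 0}" using hcomp0_eqI[of g H] g E0 by auto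
      qed
      moreover have "(\<lambda>_. 0) \<in> Ee" using fv.subspace_0[OF Es] by (simp add: zero_fun_def)
      ultimately show ?thesis by auto
    qed
  qed
  show ?thesis unfolding simple_subcoalg_def using sc ne min by blast
qed

lemma D2:
  assumes hopf: "graded_hopf H"
    and P4: "\<And>a. a \<in> hcomp H 0 \<Longrightarrow> a \<noteq> (\<lambda>_. 0) \<Longrightarrow> \<exists>M. maxideal H M \<and> a \<notin> M"
  shows "hcomp H 0 \<subseteq> coradical (gdual H)"
proof
  fix f assume f: "f \<in> hcomp H 0"
  let ?S = "\<Union> {C. simple_subcoalg (gdual H) C}"
  have S0: "?S \<subseteq> hcomp H 0" using D1[OF hopf] by blast
  show "f \<in> coradical (gdual H)"
  proof (rule ccontr)
    assume "f \<notin> coradical (gdual H)"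
    then have "f \<notin> fv.span ?S" unfolding coradical_def lin_span_eq .
    then obtain c where c: "c \<in> hcomp H 0" "\<forall>s\<in>?S. dot0 H c s = 0" "dot0 H c f \<noteq> 0"
      using LA1'[OF S0 f] by blast
    have "c \<noteq> (\<lambda>_. 0)" using c(3) by (auto simp: dot0_def)
    then obtain M where M: "maxideal H M" "c \<notin> M" using P4 c(1) by blast
    have M0: "M \<subseteq> hcomp H 0" and Ms: "fv.subspace M" using M(1) unfolding maxideal_def ideal2_def by auto
    have "c \<notin> fv.span M" using M(2) by (simp add: subspace_span_eq[OF Ms])
    then obtain g where g: "g \<in> hcomp H 0" "\<forall>m\<in>M. dot0 H g m = 0" "dot0 H g c \<noteq> 0"
      using LA1'[OF M0 c(1)] by blast
    then have "g \<in> ann H M" unfolding ann_def by auto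
    then have "g \<in> ?S" using P3[OF M(1)] by blast
    then have "dot0 H c g = 0" using c(2) by blast
    then show False using g(3) by (simp add: dot0_comm)
  qed
qed


section \<open>Ring theory of the semisimple algebra H^0\<close>

lemma Bas_fin: "finite (Bas H n)" and Bas_card: "card (Bas H n) \<le> hdim H n"
proof -
  have e: "Bas H n = (\<lambda>k. bv (n,k)) ` {..<hdim H n}" unfolding Bas_def by auto
  show "finite (Bas H n)" unfolding e by simp
  show "card (Bas H n) \<le> hdim H n" unfolding e using card_image_le[of "{..<hdim H n}" "\<lambda>k. bv (n,k)"] by simp
qed

lemma dim_bound: "S \<subseteq> hcomp H 0 \<Longrightarrow> fv.dim S \<le> hdim H 0"
proof -
  assume "S \<subseteq> hcomp H 0"
  then have "S \<subseteq> fv.span (Bas H 0)" using hcomp_span by blast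
  then have "fv.dim S \<le> card (Bas H 0)" using fv.dim_le_card Bas_fin by blast
  then show ?thesis using Bas_card[of H 0] by simp
qed

lemma dim_strict:
  assumes S: "fv.subspace S" and T: "fv.subspace T" and ST: "S \<subseteq> T" "S \<noteq> T" and T0: "T \<subseteq> hcomp H 0"
  shows "fv.dim S < fv.dim T"
proof -
  obtain BS where BS: "BS \<subseteq> S" "fv.independent BS" "S \<subseteq> fv.span BS" "card BS = fv.dim S"
    by (rule fv.basis_exists)
  obtain BT where BT: "BT \<subseteq> T" "fv.independent BT" "T \<subseteq> fv.span BT" "card BT = fv.dim T"
    by (rule fv.basis_exists)
  have Tsp: "T \<subseteq> fv.span (Bas H 0)" using T0 hcomp_span by blast
  have finBT: "finite BT" using fv.independent_span_bound[OF Bas_fin BT(2)] BT(1) Tsp by blast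
  obtain x where x: "x \<in> T" "x \<notin> S" using ST by blast
  have "fv.span BS \<subseteq> S" using fv.span_minimal[OF BS(1) S] .
  then have xn: "x \<notin> fv.span BS" using x by blast
  have ind: "fv.independent (insert x BS)" by (rule fv.independent_insertI[OF xn BS(2)])
  have sub: "insert x BS \<subseteq> fv.span BT" using x(1) BS(1) ST(1) BT(3) by blast
  have b: "finite (insert x BS) \<and> card (insert x BS) \<le> card BT"
    by (rule fv.independent_span_bound[OF finBT ind sub])
  have "x \<notin> BS" using xn fv.span_base by blast
  then have "card (insert x BS) = Suc (card BS)" using b by simp
  then show ?thesis using b BS(4) BT(4) by simp
qed

lemma mult_diff_l: "mult H (\<lambda>z. x z - y z) w = (\<lambda>z. mult H x w z - mult H y w z)"
  by (auto simp: fun_eq_iff mult_eval algebra_simps sum_subtractf)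

lemma mult_diff_r: "mult H w (\<lambda>z. x z - y z) = (\<lambda>z. mult H w x z - mult H w y z)"
  by (auto simp: fun_eq_iff mult_eval algebra_simps sum_subtractf)

lemma hcomp0_mult: "x \<in> hcomp H 0 \<Longrightarrow> y \<in> hcomp H 0 \<Longrightarrow> mult H x y \<in> hcomp H 0"
  using mult_hcomp[of x H 0 y 0] by simp

lemma zero_hcomp[simp]: "(\<lambda>_. 0) \<in> hcomp H n"
  by (simp add: hcomp_iff)

lemma hcomp_diff: "x \<in> hcomp H n \<Longrightarrow> y \<in> hcomp H n \<Longrightarrow> (\<lambda>z. x z - y z) \<in> hcomp H n"
proof -
  assume "x \<in> hcomp H n" "y \<in> hcomp H n"
  then have "x + (\<lambda>z. (-1) * y z) \<in> hcomp H n"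
    by (intro fv.subspace_add[OF sub_hcomp] fv.subspace_scale[OF sub_hcomp])
  then show ?thesis by (simp add: plus_fun_def)
qed

lemma hcomp_add: "x \<in> hcomp H n \<Longrightarrow> y \<in> hcomp H n \<Longrightarrow> (\<lambda>z. x z + y z) \<in> hcomp H n"
  using fv.subspace_add[OF sub_hcomp] by (simp add: plus_fun_def)

lemma ideal2_left: "ideal2 H I \<Longrightarrow> left_ideal H (hcomp H 0) I"
  unfolding ideal2_def left_ideal_def subspace_iff by blast

lemma nil_zero:
  assumes hopf: "graded_hopf H" and ss: "semisimple_alg H (hcomp H 0)"
    and N: "left_ideal H (hcomp H 0) N" and nil: "\<And>x y. x \<in> N \<Longrightarrow> y \<in> N \<Longrightarrow> mult H x y = (\<lambda>_. 0)"
    and x: "x \<in> N"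
  shows "x = (\<lambda>_. 0)"
proof -
  obtain K where K: "left_ideal H (hcomp H 0) K" "ssum N K = hcomp H 0" "N \<inter> K = {\<lambda>_. 0}"
    using ss N unfolding semisimple_alg_def by blast
  have "one H \<in> ssum N K" using K(2) one_hcomp by simp
  then obtain n0 k0 where nk: "n0 \<in> N" "k0 \<in> K" "one H = (\<lambda>z. n0 z + k0 z)" unfolding ssum_def by blast
  have N0: "N \<subseteq> hcomp H 0" using N unfolding left_ideal_def by auto
  have x0: "x \<in> hcomp H 0" using x N0 by auto
  have "x = mult H x (one H)" using unit_H[OF hopf, of x] x0 by (simp add: hcomp_iff)
  also have "\<dots> = (\<lambda>z. mult H x n0 z + mult H x k0 z)" unfolding nk(3) mult_add_r' ..
  also have "\<dots> = mult H x k0" using nil[OF x nk(1)] by simp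
  finally have "x = mult H x k0" .
  moreover have "mult H x k0 \<in> K" using K(1) x0 nk(2) unfolding left_ideal_def by blast
  ultimately have "x \<in> N \<inter> K" using x by simp
  then show ?thesis using K(3) by auto
qed

lemma R1:
  assumes hopf: "graded_hopf H" and ss: "semisimple_alg H (hcomp H 0)" and I: "ideal2 H I"
  shows "\<exists>e\<in>I. (\<forall>x\<in>I. mult H x e = x \<and> mult H e x = x) \<and> (\<forall>a\<in>hcomp H 0. mult H e a = mult H a e)"
proof -
  let ?A = "hcomp H 0"
  have I0: "I \<subseteq> ?A" and Is: "fv.subspace I" and Iid: "\<And>a x. a \<in> ?A \<Longrightarrow> x \<in> I \<Longrightarrow> mult H a x \<in> I \<and> mult H x a \<in> I"
    using I unfolding ideal2_def by auto
  have assoc: "\<And>u v w. u \<in> ?A \<Longrightarrow> v \<in> ?A \<Longrightarrow> w \<in> ?A \<Longrightarrow> mult H (mult H u v) w = mult H u (mult H v w)"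
    using assoc_H[OF hopf] by (simp add: hcomp_iff)
  have ul: "\<And>x. x \<in> ?A \<Longrightarrow> mult H (one H) x = x" and ur: "\<And>x. x \<in> ?A \<Longrightarrow> mult H x (one H) = x"
    using unit_H[OF hopf] by (auto simp: hcomp_iff)
  obtain K where K: "left_ideal H ?A K" "ssum I K = ?A" "I \<inter> K = {\<lambda>_. 0}"
    using ss ideal2_left[OF I] unfolding semisimple_alg_def by blast
  have K0: "K \<subseteq> ?A" and Kid: "\<And>a x. a \<in> ?A \<Longrightarrow> x \<in> K \<Longrightarrow> mult H a x \<in> K" using K(1) unfolding left_ideal_def by auto
  have "one H \<in> ssum I K" using K(2) one_hcomp by simp
  then obtain e f where ef: "e \<in> I" "f \<in> K" "one H = (\<lambda>z. e z + f z)" unfolding ssum_def by blast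
  have e0: "e \<in> ?A" and f0: "f \<in> ?A" using ef I0 K0 by auto
  have IK: "mult H i k = (\<lambda>_. 0)" if "i \<in> I" "k \<in> K" for i k
  proof -
    have "mult H i k \<in> I" using Iid[of k i] that K0 by auto
    moreover have "mult H i k \<in> K" using Kid[of i k] that I0 by auto
    ultimately show ?thesis using K(3) by auto
  qed
  have xe: "mult H x e = x" if x: "x \<in> I" for x
  proof -
    have x0: "x \<in> ?A" using x I0 by auto
    have "x = mult H x (one H)" using ur[OF x0] by simp
    also have "\<dots> = (\<lambda>z. mult H x e z + mult H x f z)" unfolding ef(3) mult_add_r' ..
    also have "\<dots> = mult H x e" using IK[OF x ef(2)] by simp
    finally show ?thesis by simp
  qed
  have fx: "mult H f x = (\<lambda>_. 0)" if x: "x \<in> I" for x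
  proof -
    have x0: "x \<in> ?A" using x I0 by auto
    define y where "y = mult H f x"
    have yI: "y \<in> I" unfolding y_def using Iid[OF f0 x] by simp
    have y0: "y \<in> ?A" using yI I0 by auto
    define N where "N = {mult H b y | b. b \<in> ?A}"
    have NL: "left_ideal H ?A N" unfolding left_ideal_def subspace_iff fv.subspace_def
    proof (intro conjI ballI allI)
      show "N \<subseteq> ?A" unfolding N_def using hcomp0_mult y0 by blast
      show "0 \<in> N" unfolding N_def
      proof (intro CollectI exI conjI)
        show "0 = mult H (\<lambda>_. 0) y" by (simp add: mult_zero_l' zero_fun_def)
        show "(\<lambda>_. 0) \<in> hcomp H 0" by simp
      qed
    next
      fix u v assume "u \<in> N" "v \<in> N"
      then obtain bu bv' where "u = mult H bu y" "v = mult H bv' y" "bu \<in> ?A" "bv' \<in> ?A" unfolding N_def by blast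
      then show "u + v \<in> N" unfolding N_def using mult_add_l[of H bu bv' y]
        by (auto intro!: exI[of _ "bu + bv'"] fv.subspace_add[OF sub_hcomp])
    next
      fix c u assume "u \<in> N"
      then obtain bu where "u = mult H bu y" "bu \<in> ?A" unfolding N_def by blast
      then show "(\<lambda>a. c * u a) \<in> N" unfolding N_def using mult_scale_l[of H c bu y]
        by (auto intro!: exI[of _ "\<lambda>a. c * bu a"] fv.subspace_scale[OF sub_hcomp])
    next
      fix a u assume a: "a \<in> ?A" and "u \<in> N"
      then obtain bu where bu: "u = mult H bu y" "bu \<in> ?A" unfolding N_def by blast
      have "mult H a u = mult H (mult H a bu) y" unfolding bu(1) using assoc[OF a bu(2) y0] by simp
      then show "mult H a u \<in> N" unfolding N_def using hcomp0_mult[OF a bu(2)] by blast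
    qed
    have nil: "mult H u v = (\<lambda>_. 0)" if uN: "u \<in> N" and vN: "v \<in> N" for u v
    proof -
      obtain bu where bu: "u = mult H bu y" "bu \<in> ?A" using uN unfolding N_def by blast
      obtain bv' where bv: "v = mult H bv' y" "bv' \<in> ?A" using vN unfolding N_def by blast
      have yb: "mult H y bv' \<in> I" using Iid[OF bv(2) yI] by simp
      have yb0: "mult H y bv' \<in> ?A" using yb I0 by auto
      have "mult H u v = mult H bu (mult H y (mult H bv' y))"
        unfolding bu(1) bv(1) using assoc[OF bu(2) y0 hcomp0_mult[OF bv(2) y0]] .
      also have "mult H y (mult H bv' y) = mult H (mult H y bv') y" using assoc[OF y0 bv(2) y0] by simp
      also have "\<dots> = mult H (mult H (mult H y bv') f) x" using assoc[OF yb0 f0 x0] by (simp add: y_def)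
      also have "mult H (mult H y bv') f = (\<lambda>_. 0)" by (rule IK[OF yb ef(2)])
      finally show ?thesis by (simp add: mult_zero_l' mult_zero_r')
    qed
    have "y \<in> N" unfolding N_def using ul[OF y0] one_hcomp by (metis (mono_tags, lifting) mem_Collect_eq)
    then show ?thesis using nil_zero[OF hopf ss NL nil] unfolding y_def by blast
  qed
  have ex: "mult H e x = x" if x: "x \<in> I" for x
  proof -
    have x0: "x \<in> ?A" using x I0 by auto
    have "x = mult H (one H) x" using ul[OF x0] by simp
    also have "\<dots> = (\<lambda>z. mult H e x z + mult H f x z)" unfolding ef(3) mult_add_l' ..
    also have "\<dots> = mult H e x" using fx[OF x] by simp
    finally show ?thesis by simp
  qed
  have central: "mult H e a = mult H a e" if a: "a \<in> ?A" for a
  proof -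
    have "mult H a e = mult H e (mult H a e)" using ex Iid[OF a ef(1)] by simp
    also have "\<dots> = mult H (mult H e a) e" using assoc[OF e0 a e0] by simp
    also have "\<dots> = mult H e a" using xe Iid[OF a ef(1)] by simp
    finally show ?thesis by simp
  qed
  show ?thesis using ef(1) xe ex central by blast
qed


lemma ideal_central:
  assumes hopf: "graded_hopf H" and J: "ideal2 H J" and c: "c \<in> hcomp H 0"
    and cc: "\<And>b. b \<in> hcomp H 0 \<Longrightarrow> mult H c b = mult H b c"
  shows "ideal2 H {mult H j c | j. j \<in> J}"
proof -
  let ?A = "hcomp H 0"
  have J0: "J \<subseteq> ?A" and Js: "fv.subspace J" and Jid: "\<And>a x. a \<in> ?A \<Longrightarrow> x \<in> J \<Longrightarrow> mult H a x \<in> J \<and> mult H x a \<in> J"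
    using J unfolding ideal2_def by auto
  have assoc: "\<And>u v w. u \<in> ?A \<Longrightarrow> v \<in> ?A \<Longrightarrow> w \<in> ?A \<Longrightarrow> mult H (mult H u v) w = mult H u (mult H v w)"
    using assoc_H[OF hopf] by (simp add: hcomp_iff)
  show ?thesis unfolding ideal2_def fv.subspace_def
  proof (intro conjI ballI allI)
    show "{mult H j c | j. j \<in> J} \<subseteq> ?A" using J0 hcomp0_mult[OF _ c] by blast
  next
    show "0 \<in> {mult H j c | j. j \<in> J}"
    proof (intro CollectI exI conjI)
      show "0 = mult H 0 c" by (simp add: mult_zero_l)
      show "0 \<in> J" by (rule fv.subspace_0[OF Js])
    qed
  next
    fix x y assume "x \<in> {mult H j c | j. j \<in> J}" "y \<in> {mult H j c | j. j \<in> J}"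
    then obtain jx jy where "x = mult H jx c" "y = mult H jy c" "jx \<in> J" "jy \<in> J" by blast
    then show "x + y \<in> {mult H j c | j. j \<in> J}"
      by (intro CollectI exI[of _ "jx + jy"]) (auto simp: mult_add_l intro: fv.subspace_add[OF Js])
  next
    fix t x assume "x \<in> {mult H j c | j. j \<in> J}"
    then obtain jx where "x = mult H jx c" "jx \<in> J" by blast
    then show "(\<lambda>a. t * x a) \<in> {mult H j c | j. j \<in> J}"
      by (intro CollectI exI[of _ "\<lambda>a. t * jx a"]) (auto simp: mult_scale_l intro: fv.subspace_scale[OF Js])
  next
    fix a x assume a: "a \<in> ?A" and "x \<in> {mult H j c | j. j \<in> J}"
    then obtain jx where jx: "x = mult H jx c" "jx \<in> J" by blast
    have jx0: "jx \<in> ?A" using jx J0 by auto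
    have "mult H a x = mult H (mult H a jx) c" unfolding jx(1) using assoc[OF a jx0 c] by simp
    moreover have "mult H a jx \<in> J" using Jid[OF a jx(2)] by simp
    ultimately show "mult H a x \<in> {mult H j c | j. j \<in> J}" by blast
    have "mult H x a = mult H jx (mult H c a)" unfolding jx(1) using assoc[OF jx0 c a] by simp
    also have "\<dots> = mult H jx (mult H a c)" using cc[OF a] by simp
    also have "\<dots> = mult H (mult H jx a) c" using assoc[OF jx0 a c] by simp
    finally have "mult H x a = mult H (mult H jx a) c" .
    moreover have "mult H jx a \<in> J" using Jid[OF a jx(2)] by simp
    ultimately show "mult H x a \<in> {mult H j c | j. j \<in> J}" by blast
  qed
qed

lemma ideal2_zero: "ideal2 H {\<lambda>_. 0}"
  unfolding ideal2_def fv.subspace_def by (auto simp: mult_zero_l' mult_zero_r' zero_fun_def)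

lemma P4:
  fixes H :: "('k::field) hopf_data"
  assumes hopf: "graded_hopf H" and ss: "semisimple_alg H (hcomp H 0)"
    and a: "a \<in> hcomp H 0" and ane: "a \<noteq> (\<lambda>_. 0)"
  shows "\<exists>M. maxideal H M \<and> a \<notin> M"
proof -
  let ?A = "hcomp H 0"
  have assoc: "\<And>u v w. u \<in> ?A \<Longrightarrow> v \<in> ?A \<Longrightarrow> w \<in> ?A \<Longrightarrow> mult H (mult H u v) w = mult H u (mult H v w)"
    using assoc_H[OF hopf] by (simp add: hcomp_iff)
  have ul: "\<And>x. x \<in> ?A \<Longrightarrow> mult H (one H) x = x" and ur: "\<And>x. x \<in> ?A \<Longrightarrow> mult H x (one H) = x"
    using unit_H[OF hopf] by (auto simp: hcomp_iff)
  have one0: "one H \<in> ?A" by (rule one_hcomp)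
  define Q where "Q n \<longleftrightarrow> (\<exists>I. ideal2 H I \<and> a \<notin> I \<and> fv.dim I = n)" for n
  have Q0: "Q (fv.dim {(\<lambda>_. 0) :: nat \<times> nat \<Rightarrow> 'k})" unfolding Q_def
    by (intro exI[of _ "{\<lambda>_. 0}"] conjI ideal2_zero) (use ane in auto)
  have Qb: "\<forall>n. Q n \<longrightarrow> n \<le> hdim H 0"
  proof (intro allI impI)
    fix n assume "Q n"
    then obtain I where I: "ideal2 H I" "fv.dim I = n" unfolding Q_def by blast
    then have "I \<subseteq> ?A" unfolding ideal2_def by simp
    then show "n \<le> hdim H 0" using dim_bound I(2) by blast
  qed
  have Qb': "\<forall>n. Q n \<longrightarrow> (\<lambda>n. n) n < Suc (hdim H 0)" using Qb by auto
  obtain n0 where n0: "Q n0" "\<forall>n. Q n \<longrightarrow> n \<le> n0" using ex_has_greatest_nat[OF Q0 Qb'] by auto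
  then obtain M where M: "ideal2 H M" "a \<notin> M" "fv.dim M = n0" unfolding Q_def by blast
  have big: "fv.dim J \<le> fv.dim M" if J: "ideal2 H J" "a \<notin> J" for J
  proof -
    have "Q (fv.dim J)" unfolding Q_def using J by blast
    then show ?thesis using n0(2) M(3) by simp
  qed
  have M0: "M \<subseteq> ?A" and Ms: "fv.subspace M" and Mid: "\<And>b x. b \<in> ?A \<Longrightarrow> x \<in> M \<Longrightarrow> mult H b x \<in> M \<and> mult H x b \<in> M"
    using M(1) unfolding ideal2_def by auto
  have "maxideal H M" unfolding maxideal_def
  proof (intro conjI allI impI M(1))
    show "M \<noteq> ?A" using a M(2) by blast
  next
    fix J assume J: "ideal2 H J" and MJ: "M \<subseteq> J"
    have J0: "J \<subseteq> ?A" and Js: "fv.subspace J" and Jid: "\<And>b x. b \<in> ?A \<Longrightarrow> x \<in> J \<Longrightarrow> mult H b x \<in> J \<and> mult H x b \<in> J"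
      using J unfolding ideal2_def by auto
    show "J = M \<or> J = ?A"
    proof (cases "J = M")
      case True then show ?thesis by simp
    next
      case False
      have "fv.dim M < fv.dim J" by (rule dim_strict[OF Ms Js MJ _ J0]) (use False in auto)
      have aJ: "a \<in> J"
      proof (rule ccontr)
        assume "a \<notin> J"
        then have "fv.dim J \<le> fv.dim M" by (rule big[OF J])
        then show False using \<open>fv.dim M < fv.dim J\<close> by simp
      qed
      obtain e where e: "e \<in> M" "\<And>x. x \<in> M \<Longrightarrow> mult H x e = x \<and> mult H e x = x"
        "\<And>b. b \<in> ?A \<Longrightarrow> mult H e b = mult H b e"
        using R1[OF hopf ss M(1)] by blast
      have e0: "e \<in> ?A" using e(1) M0 by auto
      define f where "f = (\<lambda>z. one H z - e z)"
      have f0: "f \<in> ?A" unfolding f_def by (rule hcomp_diff[OF one0 e0])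
      have fc: "mult H f b = mult H b f" if b: "b \<in> ?A" for b
        unfolding f_def mult_diff_l mult_diff_r using ul[OF b] ur[OF b] e(3)[OF b] by simp
      have fe: "mult H f e = (\<lambda>_. 0)" unfolding f_def mult_diff_l using ul[OF e0] e(2)[OF e(1)] by simp
      define J' where "J' = {mult H j f | j. j \<in> J}"
      have J'i: "ideal2 H J'" unfolding J'_def by (rule ideal_central[OF hopf J f0 fc])
      have J'J: "J' \<subseteq> J" unfolding J'_def using Jid f0 by blast
      obtain g where g: "g \<in> J'" "\<And>x. x \<in> J' \<Longrightarrow> mult H x g = x \<and> mult H g x = x"
        "\<And>b. b \<in> ?A \<Longrightarrow> mult H g b = mult H b g"
        using R1[OF hopf ss J'i] by blast
      have g0: "g \<in> ?A" using g(1) J'i unfolding ideal2_def by auto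
      obtain j0 where j0: "g = mult H j0 f" "j0 \<in> J" using g(1) unfolding J'_def by blast
      have j00: "j0 \<in> ?A" using j0(2) J0 by auto
      have ge: "mult H g e = (\<lambda>_. 0)" unfolding j0(1) using assoc[OF j00 f0 e0] fe by (simp add: mult_zero_r')
      have eg: "mult H e g = (\<lambda>_. 0)" using g(3)[OF e0] ge by simp
      define h where "h = (\<lambda>z. one H z - g z)"
      have h0: "h \<in> ?A" unfolding h_def by (rule hcomp_diff[OF one0 g0])
      have hc: "mult H h b = mult H b h" if b: "b \<in> ?A" for b
        unfolding h_def mult_diff_l mult_diff_r using ul[OF b] ur[OF b] g(3)[OF b] by simp
      define K where "K = {mult H b h | b. b \<in> ?A}"
      have Ai: "ideal2 H ?A" unfolding ideal2_def using sub_hcomp hcomp0_mult by blast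
      have Ki: "ideal2 H K" unfolding K_def by (rule ideal_central[OF hopf Ai h0 hc])
      have MK: "M \<subseteq> K"
      proof
        fix m assume m: "m \<in> M"
        have m0: "m \<in> ?A" using m M0 by auto
        have "mult H m g = mult H (mult H m e) g" using e(2)[OF m] by simp
        also have "\<dots> = mult H m (mult H e g)" using assoc[OF m0 e0 g0] .
        finally have mg: "mult H m g = (\<lambda>_. 0)" using eg by (simp add: mult_zero_r')
        have mh: "mult H m h = m" unfolding h_def mult_diff_r using ur[OF m0] mg by simp
        show "m \<in> K" unfolding K_def by (intro CollectI exI[of _ m] conjI m0) (simp add: mh)
      qed
      have aK: "a \<notin> K"
      proof
        assume "a \<in> K"
        then obtain b where b: "a = mult H b h" "b \<in> ?A" unfolding K_def by blast
        have gg: "mult H g g = g" using g(2)[OF g(1)] by simp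
        have hg: "mult H h g = (\<lambda>_. 0)" unfolding h_def mult_diff_l using ul[OF g0] gg by simp
        have ag: "mult H a g = (\<lambda>_. 0)" unfolding b(1) using assoc[OF b(2) h0 g0] hg by (simp add: mult_zero_r')
        have afJ: "mult H a f \<in> J'" unfolding J'_def using aJ by blast
        have af0: "mult H a f \<in> ?A" using hcomp0_mult[OF a f0] .
        have "mult H a f = mult H (mult H a f) g" using g(2)[OF afJ] by simp
        also have "\<dots> = mult H a (mult H f g)" using assoc[OF a f0 g0] .
        also have "mult H f g = mult H g f" using fc[OF g0] by simp
        also have "mult H a (mult H g f) = mult H (mult H a g) f" using assoc[OF a g0 f0] by simp
        finally have af: "mult H a f = (\<lambda>_. 0)" using ag by (simp add: mult_zero_l')
        have oef: "one H = (\<lambda>z. e z + f z)" unfolding f_def by auto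
        have "a = mult H a (one H)" using ur[OF a] by simp
        also have "\<dots> = (\<lambda>z. mult H a e z + mult H a f z)" unfolding oef mult_add_r' ..
        also have "\<dots> = mult H a e" using af by simp
        finally have "a = mult H a e" .
        moreover have "mult H a e \<in> M" using Mid[OF a e(1)] by simp
        ultimately show False using M(2) by simp
      qed
      have "K = M"
      proof (rule ccontr)
        assume "K \<noteq> M"
        have Ks: "fv.subspace K" and K0: "K \<subseteq> ?A" using Ki unfolding ideal2_def by auto
        have "fv.dim M < fv.dim K" by (rule dim_strict[OF Ms Ks MK _ K0]) (use \<open>K \<noteq> M\<close> in auto)
        then show False using big[OF Ki aK] by simp
      qed
      have "h \<in> K" unfolding K_def by (intro CollectI exI[of _ "one H"] conjI one0) (simp add: ul[OF h0])
      then have hM: "h \<in> M" using \<open>K = M\<close> by simp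
      have "h = mult H h e" using e(2)[OF hM] by simp
      also have "\<dots> = e" unfolding h_def mult_diff_l using ul[OF e0] ge by simp
      finally have he: "h = e" .
      have gz: "g z = one H z - h z" for z unfolding h_def by simp
      have gf: "g = f" unfolding f_def
      proof
        fix z show "g z = one H z - e z" using gz[of z] he by simp
      qed
      have "one H = e + g" unfolding gf f_def by (auto simp: fun_eq_iff)
      moreover have "e \<in> J" using e(1) MJ by auto
      moreover have "g \<in> J" using g(1) J'J by auto
      ultimately have oneJ: "one H \<in> J" using fv.subspace_add[OF Js] by simp
      have "?A \<subseteq> J"
      proof
        fix x assume x: "x \<in> ?A"
        have "mult H x (one H) \<in> J" using Jid[OF x oneJ] by simp
        then show "x \<in> J" using ur[OF x] by simp
      qed
      then show ?thesis using J0 by auto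
    qed
  qed
  then show ?thesis using M(2) by blast
qed

lemma corL: "graded_hopf H \<Longrightarrow> hcomp H 0 = coradical H \<Longrightarrow> semisimple_alg H (hcomp H 0) \<Longrightarrow>
  coradical (gdual H) = hcomp (gdual H) 0"
  using corL_sub[of H] D2[of H] P4[of H] by auto

theorem theorem2p2:
  fixes H :: "('k::field) hopf_data"
  assumes "graded_hopf H"
    and "hcomp H 0 = coradical H"
    and "cosemisimple H (hcomp H 0)"
    and "semisimple_alg H (hcomp H 0)"
  shows "(coradically_graded H \<and> generated_by_01 H) \<longleftrightarrow>
         (coradically_graded (gdual H) \<and> generated_by_01 (gdual H))"
proof -
  have corH: "coradical H = hcomp H 0" using assms(2) by simp
  have corL: "coradical (gdual H) = hcomp (gdual H) 0" using corL assms(1,2,4) by blast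
  have gH: "generated_by_01 H \<longleftrightarrow> SURJ H" by (rule gen_iff) (rule assoc_H[OF assms(1)])
  have gL: "generated_by_01 (gdual H) \<longleftrightarrow> SURJ (gdual H)" by (rule gen_iff) (simp add: assoc_L[OF assms(1)])
  have "SURJ (gdual H) \<longleftrightarrow> INJ H" using INJ_dual_iff[of "gdual H"] INJ_gdual2[of H] by simp
  then show ?thesis using cg_iff[OF corH] cg_iff[OF corL] gH gL INJ_dual_iff[of H] by blast
qed

end
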